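(* Let $d\in\mathbb{N}$, let $P$ be a stationary and ergodic probability measure on $\Omega=[0,1]^{\mathcal{K}^d}$, fix an integer $0\le q<d$ and $t\in[0,1]$, and let $\widehat\beta_q(t)$ be the non-random constant such that $|\Lambda_n|^{-1}\beta_q^n(t)\to\widehat\beta_q(t)$ almost surely. If there exists a positive integer $K$ with $P(\Omega_q(0,K,t))>0$, then $\widehat\beta_q(t)>0$.
   Context: An elementary interval is $[l,l+1]$ or $[l]=[l,l]$ with $l\in\mathbb{Z}$; an elementary cube in $\mathbb{R}^d$ is a product of $d$ elementary intervals, of dimension equal to the number of nondegenerate factors; $\mathcal{K}^d$ is the set of all elementary cubes. A cubical set is a union of elementary cubes. For a cubical set $X$, $C_k(X)$ is the free $\mathbb{Z}$-module on the $k$-dimensional elementary cubes contained in $X$ with the standard cubical boundary operator; $H_k(X)$ is the resulting homology and, for bounded $X$, $\beta_k(X)$ is the rank of the free part of $H_k(X)$. $\Omega=[0,1]^{\mathcal{K}^d}$ with product topology and Borel $\sigma$-field, $\omega=(\omega_Q)_{Q\in\mathcal{K}^d}$; $\tau_x\omega=(\omega_{-x+Q})_Q$ for $x\in\mathbb{Z}^d$; stationarity: $P\circ\tau_x^{-1}=P$ for all $x$; ergodicity: translation-invariant events have probability $0$ or $1$. $X(t)=\bigcup\{Q:\omega_Q\le t\}$, $\Lambda_n=[-n,n]^d$, $X^n(t)=X(t)\cap\Lambda_n$, $\beta_q^n(t)=\beta_q(X^n(t))$, $|\Lambda_n|=(2n)^d$. For $x\in\mathbb{Z}^d$ and $K\in\mathbb{N}$,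 let $\mathcal{L}_{x,K}=\{Q\in\mathcal{K}^d:Q\subset x+\Lambda_K\}$. For a finite $\mathcal{L}\subset\mathcal{K}^d$ with $\mathcal{L}_{x,K}\subset\mathcal{L}$, set $X_{\mathcal{L}}(t)=\bigcup\{Q\in\mathcal{L}:\omega_Q\le t\}$ and $X^{x,K}_{\mathcal{L}}(t)=\bigcup\{Q\in\mathcal{L}\setminus\mathcal{L}_{x,K}:\omega_Q\le t\}$. $\Omega_q(x,K,t)\subset\Omega$ is the set of configurations $\omega$ such that $\beta_q(X_{\mathcal{L}}(t))\ge 1+\beta_q(X^{x,K}_{\mathcal{L}}(t))$ for every finite $\mathcal{L}\subset\mathcal{K}^d$ with $\mathcal{L}_{x,K}\subset\mathcal{L}$. *)

theory Defs
  imports "HOL-Probability.Probability"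
begin

text \<open>An elementary interval is encoded as a pair (l, b): (l, True) is [l, l+1],
  (l, False) is the degenerate interval [l] = [l, l]. An elementary cube in R^d
  is a list of d elementary intervals. Points of R^d are functions nat => real
  which vanish at coordinates i >= d.\<close>

type_synonym cube = "(int \<times> bool) list"

definition cubesK :: "nat \<Rightarrow> cube set" where
  "cubesK d = {Q. length Q = d}"

definition cube_dim :: "cube \<Rightarrow> nat" where
  "cube_dim Q = length (filter snd Q)"

definition cube_set :: "cube \<Rightarrow> (nat \<Rightarrow> real) set" where
  "cube_set Q = {p. (\<forall>i<length Q. real_of_int (fst (Q!i)) \<le> p i \<and>
                        p i \<le> real_of_int (fst (Q!i)) + (if snd (Q!i) then 1 else 0))
                  \<and> (\<forall>i. length Q \<le> i \<longrightarrow> p i = 0)}"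

definition elem_cubes :: "nat \<Rightarrow> nat \<Rightarrow> (nat \<Rightarrow> real) set \<Rightarrow> cube set" where
  "elem_cubes d k X = {Q \<in> cubesK d. cube_dim Q = k \<and> cube_set Q \<subseteq> X}"

definition chains :: "nat \<Rightarrow> nat \<Rightarrow> (nat \<Rightarrow> real) set \<Rightarrow> (cube \<Rightarrow> int) set" where
  "chains d k X = {c. finite {Q. c Q \<noteq> 0} \<and> (\<forall>Q. c Q \<noteq> 0 \<longrightarrow> Q \<in> elem_cubes d k X)}"

text \<open>Coefficient of the face P in the cubical boundary of the elementary cube Q:
  the boundary of Q = I_1 x ... x I_d is the sum over nondegenerate I_i = [l,l+1]
  of (-1)^(number of nondegenerate I_j, j < i) times
  (Q with I_i replaced by [l+1]) - (Q with I_i replaced by [l]).\<close>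
definition bd_coeff :: "cube \<Rightarrow> cube \<Rightarrow> int" where
  "bd_coeff Q P = (\<Sum>i<length Q. if snd (Q!i) then
      (-1) ^ length (filter snd (take i Q)) *
      ((if P = Q[i := (fst (Q!i) + 1, False)] then 1 else 0)
       - (if P = Q[i := (fst (Q!i), False)] then 1 else 0))
    else 0)"

definition boundary :: "(cube \<Rightarrow> int) \<Rightarrow> (cube \<Rightarrow> int)" where
  "boundary c = (\<lambda>P. \<Sum>Q\<in>{Q. c Q \<noteq> 0}. c Q * bd_coeff Q P)"

definition cycles :: "nat \<Rightarrow> nat \<Rightarrow> (nat \<Rightarrow> real) set \<Rightarrow> (cube \<Rightarrow> int) set" where
  "cycles d k X = {c \<in> chains d k X. boundary c = (\<lambda>_. 0)}"

definition bdries :: "nat \<Rightarrow> nat \<Rightarrow> (nat \<Rightarrow> real) set \<Rightarrow> (cube \<Rightarrow> int) set" where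
  "bdries d k X = boundary ` chains d (Suc k) X"

text \<open>beta_k(X): rank of the free part of H_k(X) = Z_k(X)/B_k(X), i.e. the maximal
  number of elements of Z_k(X) that are Z-linearly independent modulo B_k(X).\<close>
definition betti :: "nat \<Rightarrow> nat \<Rightarrow> (nat \<Rightarrow> real) set \<Rightarrow> nat" where
  "betti d k X = Sup {card S | S. finite S \<and> S \<subseteq> cycles d k X \<and>
      (\<forall>a :: (cube \<Rightarrow> int) \<Rightarrow> int.
         (\<lambda>Q. \<Sum>s\<in>S. a s * s Q) \<in> bdries d k X \<longrightarrow> (\<forall>s\<in>S. a s = 0))}"

definition box :: "nat \<Rightarrow> int list \<Rightarrow> nat \<Rightarrow> (nat \<Rightarrow> real) set" where
  "box d x K = {p. (\<forall>i<d. real_of_int (x!i) - real K \<le> p i \<and> p i \<le> real_of_int (x!i) + real K)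
                  \<and> (\<forall>i. d \<le> i \<longrightarrow> p i = 0)}"

definition Lambda :: "nat \<Rightarrow> nat \<Rightarrow> (nat \<Rightarrow> real) set" where
  "Lambda d n = box d (replicate d 0) n"

definition OmegaM :: "nat \<Rightarrow> (cube \<Rightarrow> real) measure" where
  "OmegaM d = (\<Pi>\<^sub>M Q\<in>cubesK d. restrict_space borel {0..1::real})"

definition shift_cube :: "int list \<Rightarrow> cube \<Rightarrow> cube" where
  "shift_cube x Q = map2 (\<lambda>(l, b) xi. (l + xi, b)) Q x"

definition tau :: "nat \<Rightarrow> int list \<Rightarrow> (cube \<Rightarrow> real) \<Rightarrow> (cube \<Rightarrow> real)" where
  "tau d x \<omega> = (\<lambda>Q\<in>cubesK d. \<omega> (shift_cube (map uminus x) Q))"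

definition Xt :: "nat \<Rightarrow> (cube \<Rightarrow> real) \<Rightarrow> real \<Rightarrow> (nat \<Rightarrow> real) set" where
  "Xt d \<omega> t = \<Union> {cube_set Q | Q. Q \<in> cubesK d \<and> \<omega> Q \<le> t}"

definition XL :: "cube set \<Rightarrow> (cube \<Rightarrow> real) \<Rightarrow> real \<Rightarrow> (nat \<Rightarrow> real) set" where
  "XL L \<omega> t = \<Union> {cube_set Q | Q. Q \<in> L \<and> \<omega> Q \<le> t}"

definition Lbox :: "nat \<Rightarrow> int list \<Rightarrow> nat \<Rightarrow> cube set" where
  "Lbox d x K = {Q \<in> cubesK d. cube_set Q \<subseteq> box d x K}"

definition Omega_q :: "nat \<Rightarrow> nat \<Rightarrow> int list \<Rightarrow> nat \<Rightarrow> real \<Rightarrow> (cube \<Rightarrow> real) set" where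
  "Omega_q d q x K t = {\<omega> \<in> space (OmegaM d). \<forall>L. finite L \<and> L \<subseteq> cubesK d \<and> Lbox d x K \<subseteq> L \<longrightarrow>
       1 + betti d q (XL (L - Lbox d x K) \<omega> t) \<le> betti d q (XL L \<omega> t)}"

end

theory Submission
  imports Defs
begin


definition indepZ :: "('c \<Rightarrow> int) set \<Rightarrow> ('c \<Rightarrow> int) set \<Rightarrow> bool" where
  "indepZ B S \<longleftrightarrow> (\<forall>a :: ('c \<Rightarrow> int) \<Rightarrow> int. (\<lambda>Q. \<Sum>s\<in>S. a s * s Q) \<in> B \<longrightarrow> (\<forall>s\<in>S. a s = 0))"

lemma indepZD: "indepZ B S \<Longrightarrow> (\<lambda>Q. \<Sum>s\<in>S. a s * s Q) \<in> B \<Longrightarrow> s \<in> S \<Longrightarrow> a s = 0"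
  unfolding indepZ_def by blast

lemma rank_bound:
  fixes E :: "'c set"
  assumes "finite E"
  shows "finite S \<Longrightarrow> (\<forall>s\<in>S. \<forall>Q. s Q \<noteq> 0 \<longrightarrow> Q \<in> E) \<Longrightarrow> indepZ {\<lambda>_. 0} S \<Longrightarrow> card S \<le> card E"
  using assms
proof (induction E arbitrary: S rule: finite_induct)
  case empty
  show ?case
  proof (cases "S = {}")
    case False
    then obtain s0 where s0: "s0 \<in> S" by auto
    have z: "\<And>s. s \<in> S \<Longrightarrow> s = (\<lambda>_. 0)" using empty by auto
    have "(\<lambda>Q. \<Sum>s\<in>S. (if s = s0 then 1 else 0) * s Q) = (\<lambda>_. 0)"
      by (intro ext sum.neutral) (simp add: z[of s0])
    then have "(\<lambda>Q. \<Sum>s\<in>S. (if s = s0 then 1 else 0) * s Q) \<in> {\<lambda>_. 0}" by simp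
    from indepZD[OF empty(3) this s0] have "(if s0 = s0 then 1 else 0 :: int) = 0" .
    then show ?thesis by simp
  qed simp
next
  case (insert e E)
  show ?case
  proof (cases "\<forall>s\<in>S. s e = 0")
    case True
    then have "\<forall>s\<in>S. \<forall>Q. s Q \<noteq> 0 \<longrightarrow> Q \<in> E" using insert.prems(2) by auto
    then have "card S \<le> card E" using insert by auto
    then show ?thesis using insert by simp
  next
    case False
    then obtain s0 where s0: "s0 \<in> S" "s0 e \<noteq> 0" by auto
    define phi where "phi s = (\<lambda>Q. s0 e * s Q - s e * s0 Q)" for s
    have indS: "indepZ {\<lambda>_. 0} S" by fact
    have inj: "inj_on phi (S - {s0})"
    proof
      fix s s' assume s: "s \<in> S - {s0}" and s': "s' \<in> S - {s0}" and eq: "phi s = phi s'"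
      show "s = s'"
      proof (rule ccontr)
        assume ne: "s \<noteq> s'"
        define a where "a u = (if u = s then s0 e else if u = s' then - s0 e else if u = s0 then s' e - s e else 0)" for u
        have "(\<lambda>Q. \<Sum>u\<in>S. a u * u Q) = (\<lambda>_. 0)"
        proof
          fix Q
          have "(\<Sum>u\<in>S. a u * u Q) = (\<Sum>u\<in>{s,s',s0}. a u * u Q)"
            using s s' s0 insert.prems(1) by (intro sum.mono_neutral_right) (auto simp: a_def)
          also have "\<dots> = s0 e * s Q - s0 e * s' Q + (s' e - s e) * s0 Q"
          proof -
            have d: "s \<noteq> s0" "s' \<noteq> s0" "s0 \<noteq> s" "s0 \<noteq> s'" "s' \<noteq> s" using s s' ne by auto
            show ?thesis using ne d by (simp add: a_def)
          qed
          also have "\<dots> = phi s Q - phi s' Q" by (simp add: phi_def algebra_simps)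
          also have "\<dots> = 0" using eq by simp
          finally show "(\<Sum>u\<in>S. a u * u Q) = 0" .
        qed
        then have "a s = 0" using indepZD[OF indS, of a s] s by simp
        then show False using s0 by (simp add: a_def)
      qed
    qed
    have supp: "\<forall>u\<in>phi ` (S - {s0}). \<forall>Q. u Q \<noteq> 0 \<longrightarrow> Q \<in> E"
    proof (intro ballI allI impI)
      fix u Q assume u: "u \<in> phi ` (S - {s0})" and nz: "u Q \<noteq> 0"
      then obtain s where s: "s \<in> S" and us: "u = phi s" by auto
      have "Q \<noteq> e" using nz us by (auto simp: phi_def)
      moreover have "s Q \<noteq> 0 \<or> s0 Q \<noteq> 0" using nz us by (auto simp: phi_def)
      ultimately show "Q \<in> E" using insert.prems(2) s s0 by auto
    qed
    have ind': "indepZ {\<lambda>_. 0} (phi ` (S - {s0}))"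
      unfolding indepZ_def
    proof (intro allI impI ballI)
      fix a' :: "('c \<Rightarrow> int) \<Rightarrow> int" and u
      assume h: "(\<lambda>Q. \<Sum>s\<in>phi ` (S - {s0}). a' s * s Q) \<in> {\<lambda>_. 0}" and u: "u \<in> phi ` (S - {s0})"
      define a where "a s = (if s = s0 then - (\<Sum>v\<in>S - {s0}. a' (phi v) * v e) else a' (phi s) * s0 e)" for s
      have "(\<lambda>Q. \<Sum>s\<in>S. a s * s Q) = (\<lambda>_. 0)"
      proof
        fix Q
        have "(\<Sum>s\<in>S. a s * s Q) = a s0 * s0 Q + (\<Sum>s\<in>S - {s0}. a s * s Q)"
          using s0 insert.prems(1) by (simp add: sum.remove)
        also have "(\<Sum>s\<in>S - {s0}. a s * s Q) = (\<Sum>s\<in>S - {s0}. a' (phi s) * s0 e * s Q)"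
          by (intro sum.cong) (auto simp: a_def)
        finally have 0: "(\<Sum>s\<in>S. a s * s Q) = a s0 * s0 Q + (\<Sum>s\<in>S - {s0}. a' (phi s) * s0 e * s Q)" .
        have 2: "(\<Sum>s\<in>S - {s0}. a' (phi s) * (s0 e * s Q - s e * s0 Q))
          = (\<Sum>s\<in>S - {s0}. a' (phi s) * s0 e * s Q) - (\<Sum>v\<in>S - {s0}. a' (phi v) * v e) * s0 Q"
          by (simp add: sum_subtractf sum_distrib_right right_diff_distrib mult.assoc mult.left_commute)
        have 1: "(\<Sum>s\<in>S. a s * s Q) = (\<Sum>s\<in>S - {s0}. a' (phi s) * (s0 e * s Q - s e * s0 Q))"
          unfolding 0 2 by (simp add: a_def)
        have "(\<Sum>s\<in>phi ` (S - {s0}). a' s * s Q) = (\<Sum>s\<in>S - {s0}. a' (phi s) * phi s Q)"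
          using inj by (simp add: sum.reindex)
        moreover have "(\<Sum>s\<in>phi ` (S - {s0}). a' s * s Q) = 0" using h by (simp add: fun_eq_iff)
        ultimately show "(\<Sum>s\<in>S. a s * s Q) = 0" using 1 by (simp add: phi_def)
      qed
      then have "\<forall>s\<in>S. a s = 0" using indepZD[OF indS, of a] by simp
      moreover obtain v where "v \<in> S - {s0}" "u = phi v" using u by auto
      ultimately show "a' u = 0" using s0 by (auto simp: a_def)
    qed
    have "card (phi ` (S - {s0})) \<le> card E"
      using insert.IH[OF _ supp ind'] insert.prems(1) by auto
    then have "card (S - {s0}) \<le> card E" using card_image[OF inj] by simp
    then show ?thesis using s0 insert.prems(1) insert.hyps by (simp add: card_Diff_singleton)
  qed
qed



definition submod :: "('c \<Rightarrow> int) set \<Rightarrow> bool" where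
  "submod B \<longleftrightarrow> (\<lambda>_. 0) \<in> B \<and> (\<forall>x\<in>B. \<forall>y\<in>B. (\<lambda>Q. x Q + y Q) \<in> B) \<and> (\<forall>x\<in>B. \<forall>k::int. (\<lambda>Q. k * x Q) \<in> B)"

lemma indepZ_mono: "B' \<subseteq> B \<Longrightarrow> indepZ B S \<Longrightarrow> indepZ B' S"
  unfolding indepZ_def by blast

lemma submod_ext: "submod B \<Longrightarrow> submod {\<lambda>P. b P + k * g P | b k. b \<in> B}"
  unfolding submod_def
proof (intro conjI ballI allI)
  assume B: "(\<lambda>_. 0) \<in> B \<and> (\<forall>x\<in>B. \<forall>y\<in>B. (\<lambda>Q. x Q + y Q) \<in> B) \<and> (\<forall>x\<in>B. \<forall>k::int. (\<lambda>Q. k * x Q) \<in> B)"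
  show "(\<lambda>_. 0) \<in> {\<lambda>P. b P + k * g P | b k. b \<in> B}"
    using B by (intro CollectI exI[of _ "\<lambda>_. 0"] exI[of _ 0]) auto
  fix x y assume x: "x \<in> {\<lambda>P. b P + k * g P | b k. b \<in> B}" and y: "y \<in> {\<lambda>P. b P + k * g P | b k. b \<in> B}"
  then obtain b1 k1 b2 k2 where "x = (\<lambda>P. b1 P + k1 * g P)" "b1 \<in> B" "y = (\<lambda>P. b2 P + k2 * g P)" "b2 \<in> B" by blast
  then show "(\<lambda>Q. x Q + y Q) \<in> {\<lambda>P. b P + k * g P | b k. b \<in> B}"
    using B by (intro CollectI exI[of _ "\<lambda>Q. b1 Q + b2 Q"] exI[of _ "k1 + k2"]) (auto simp: algebra_simps)
next
  fix x and j :: int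
  assume B: "(\<lambda>_. 0) \<in> B \<and> (\<forall>x\<in>B. \<forall>y\<in>B. (\<lambda>Q. x Q + y Q) \<in> B) \<and> (\<forall>x\<in>B. \<forall>k::int. (\<lambda>Q. k * x Q) \<in> B)"
  assume x: "x \<in> {\<lambda>P. b P + k * g P | b k. b \<in> B}"
  then obtain b1 k1 where "x = (\<lambda>P. b1 P + k1 * g P)" "b1 \<in> B" by blast
  then show "(\<lambda>Q. j * x Q) \<in> {\<lambda>P. b P + k * g P | b k. b \<in> B}"
    using B by (intro CollectI exI[of _ "\<lambda>Q. j * b1 Q"] exI[of _ "j * k1"]) (auto simp: algebra_simps)
qed

lemma drop1:
  assumes B: "submod B" and fin: "finite S" and ind: "indepZ B S"
  shows "\<exists>S0\<subseteq>S. card S \<le> card S0 + 1 \<and> indepZ {\<lambda>P. b P + k * g P | b k. b \<in> B} S0"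
proof (cases "indepZ {\<lambda>P. b P + k * g P | b k. b \<in> B} S")
  case True then show ?thesis by auto
next
  case False
  then obtain a s0 where h: "(\<lambda>Q. \<Sum>s\<in>S. a s * s Q) \<in> {\<lambda>P. b P + k * g P | b k. b \<in> B}"
    and s0: "s0 \<in> S" "a s0 \<noteq> 0" unfolding indepZ_def by blast
  then obtain b c where bB: "b \<in> B" and hb: "\<And>Q. (\<Sum>s\<in>S. a s * s Q) = b Q + c * g Q"
    by (auto simp: fun_eq_iff)
  have Bz: "(\<lambda>_. 0) \<in> B" and Badd: "\<And>x y. x \<in> B \<Longrightarrow> y \<in> B \<Longrightarrow> (\<lambda>Q. x Q + y Q) \<in> B"
    and Bsc: "\<And>x k. x \<in> B \<Longrightarrow> (\<lambda>Q. k * x Q) \<in> B" using B unfolding submod_def by auto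
  have "indepZ {\<lambda>P. b P + k * g P | b k. b \<in> B} (S - {s0})"
    unfolding indepZ_def
  proof (intro allI impI ballI)
    fix a' :: "('a \<Rightarrow> int) \<Rightarrow> int" and s1
    assume h': "(\<lambda>Q. \<Sum>s\<in>S - {s0}. a' s * s Q) \<in> {\<lambda>P. b P + k * g P | b k. b \<in> B}"
      and s1: "s1 \<in> S - {s0}"
    then obtain b' c' where bB': "b' \<in> B" and hb': "\<And>Q. (\<Sum>s\<in>S - {s0}. a' s * s Q) = b' Q + c' * g Q"
      by (auto simp: fun_eq_iff)
    define al where "al s = (if s = s0 then - c' * a s0 else c * a' s - c' * a s)" for s
    have sum_al: "(\<Sum>s\<in>S. al s * s Q) = c * b' Q + (- c') * b Q" for Q
    proof -
      have "(\<Sum>s\<in>S. al s * s Q) = al s0 * s0 Q + (\<Sum>s\<in>S - {s0}. al s * s Q)"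
        using s0 fin by (simp add: sum.remove)
      also have "(\<Sum>s\<in>S - {s0}. al s * s Q) = (\<Sum>s\<in>S - {s0}. c * (a' s * s Q) - c' * (a s * s Q))"
        by (intro sum.cong) (auto simp: al_def algebra_simps)
      also have "\<dots> = c * (\<Sum>s\<in>S - {s0}. a' s * s Q) - c' * (\<Sum>s\<in>S - {s0}. a s * s Q)"
        by (simp add: sum_subtractf sum_distrib_left)
      also have "(\<Sum>s\<in>S - {s0}. a s * s Q) = (\<Sum>s\<in>S. a s * s Q) - a s0 * s0 Q"
        using s0 fin by (simp add: sum.remove)
      finally have "(\<Sum>s\<in>S. al s * s Q) = - c' * a s0 * s0 Q + (c * (b' Q + c' * g Q) - c' * (b Q + c * g Q - a s0 * s0 Q))"
        unfolding hb hb' by (simp add: al_def)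
      then show ?thesis by (simp add: algebra_simps)
    qed
    have "(\<lambda>Q. c * b' Q + (- c') * b Q) \<in> B" by (rule Badd[OF Bsc[OF bB'] Bsc[OF bB]])
    then have "(\<lambda>Q. \<Sum>s\<in>S. al s * s Q) \<in> B" unfolding sum_al .
    then have "al s0 = 0" using indepZD[OF ind, of al s0] s0 by simp
    then have c'0: "c' = 0" using s0 by (simp add: al_def)
    define a2 where "a2 s = (if s = s0 then 0 else a' s)" for s
    have "(\<lambda>Q. \<Sum>s\<in>S. a2 s * s Q) = b'"
    proof
      fix Q
      have "(\<Sum>s\<in>S. a2 s * s Q) = a2 s0 * s0 Q + (\<Sum>s\<in>S - {s0}. a2 s * s Q)"
        using s0 fin by (simp add: sum.remove)
      also have "(\<Sum>s\<in>S - {s0}. a2 s * s Q) = (\<Sum>s\<in>S - {s0}. a' s * s Q)"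
        by (intro sum.cong) (auto simp: a2_def)
      finally show "(\<Sum>s\<in>S. a2 s * s Q) = b' Q" using hb'[of Q] c'0 by (simp add: a2_def)
    qed
    then have "a2 s1 = 0" using indepZD[OF ind, of a2 s1] s1 bB' by simp
    then show "a' s1 = 0" using s1 by (simp add: a2_def)
  qed
  note I = this
  have C: "card S \<le> card (S - {s0}) + 1" using s0 fin by (simp add: card_Diff_singleton)
  have D: "S - {s0} \<subseteq> S" by blast
  show ?thesis by (rule exI[of _ "S - {s0}"], rule conjI[OF D conjI[OF C I]])
qed

lemma drop:
  assumes "finite N"
  shows "submod B \<Longrightarrow> finite S \<Longrightarrow> indepZ B S \<Longrightarrow>
    B' \<subseteq> {\<lambda>P. b P + (\<Sum>e\<in>N. k e * g e P) | b k. b \<in> B} \<Longrightarrow>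
    \<exists>S'\<subseteq>S. card S \<le> card S' + card N \<and> indepZ B' S'"
  using assms
proof (induction N arbitrary: B S rule: finite_induct)
  case empty
  have "B' \<subseteq> B"
  proof
    fix x assume "x \<in> B'"
    then obtain b k where "b \<in> B" "x = (\<lambda>P. b P + (\<Sum>e\<in>{}. k e * g e P))" using empty.prems(4) by blast
    then show "x \<in> B" by simp
  qed
  then have "indepZ B' S" using empty.prems(3) by (rule indepZ_mono)
  then show ?case by (intro exI[of _ S]) simp
next
  case (insert e N)
  define B1 where "B1 = {\<lambda>P. b P + k * g e P | b k. b \<in> B}"
  have "\<exists>S0\<subseteq>S. card S \<le> card S0 + 1 \<and> indepZ B1 S0"
    unfolding B1_def by (rule drop1[OF insert.prems(1-3)])
  then obtain S0 where S0: "S0 \<subseteq> S" "card S \<le> card S0 + 1" "indepZ B1 S0" by blast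
  have sB1: "submod B1" unfolding B1_def by (rule submod_ext[OF insert.prems(1)])
  have "B' \<subseteq> {\<lambda>P. b P + (\<Sum>e\<in>N. k e * g e P) | b k. b \<in> B1}"
  proof
    fix x assume "x \<in> B'"
    then obtain b k where bB: "b \<in> B" and x: "x = (\<lambda>P. b P + (\<Sum>e\<in>insert e N. k e * g e P))"
      using insert.prems(4) by blast
    have "x = (\<lambda>P. (b P + k e * g e P) + (\<Sum>e\<in>N. k e * g e P))"
      unfolding x using insert.hyps by (simp add: algebra_simps)
    moreover have "(\<lambda>P. b P + k e * g e P) \<in> B1" unfolding B1_def using bB by blast
    ultimately show "x \<in> {\<lambda>P. b P + (\<Sum>e\<in>N. k e * g e P) | b k. b \<in> B1}"
      by (intro CollectI exI[of _ "\<lambda>P. b P + k e * g e P"] exI[of _ k]) simp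
  qed
  moreover have "finite S0" using S0(1) insert.prems(2) finite_subset by blast
  ultimately have "\<exists>S'\<subseteq>S0. card S0 \<le> card S' + card N \<and> indepZ B' S'"
    using insert.IH[OF sB1 _ S0(3)] by blast
  then obtain S' where S': "S' \<subseteq> S0" "card S0 \<le> card S' + card N" "indepZ B' S'" by blast
  have "card S \<le> card S' + card (insert e N)" using S0(2) S'(2) insert.hyps by simp
  moreover have "S' \<subseteq> S" using S'(1) S0(1) by blast
  ultimately show ?case using S'(3) by blast
qed



lemma boundary_eq:
  assumes "finite F" "{Q. c Q \<noteq> 0} \<subseteq> F"
  shows "boundary c P = (\<Sum>Q\<in>F. c Q * bd_coeff Q P)"
  unfolding boundary_def using assms by (intro sum.mono_neutral_left) auto

lemma chains_zero: "(\<lambda>_. 0) \<in> chains d k X"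
  unfolding chains_def by simp

lemma boundary_zero: "boundary (\<lambda>_. 0) = (\<lambda>_. 0)"
  unfolding boundary_def by simp

lemma zero_bdries: "(\<lambda>_. 0) \<in> bdries d k X"
  unfolding bdries_def using chains_zero boundary_zero by (metis image_eqI)

lemma chains_add: "c1 \<in> chains d k X \<Longrightarrow> c2 \<in> chains d k X \<Longrightarrow> (\<lambda>Q. c1 Q + c2 Q) \<in> chains d k X"
  unfolding chains_def
proof (intro CollectI conjI allI impI)
  assume c1: "c1 \<in> {c. finite {Q. c Q \<noteq> 0} \<and> (\<forall>Q. c Q \<noteq> 0 \<longrightarrow> Q \<in> elem_cubes d k X)}"
    and c2: "c2 \<in> {c. finite {Q. c Q \<noteq> 0} \<and> (\<forall>Q. c Q \<noteq> 0 \<longrightarrow> Q \<in> elem_cubes d k X)}"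
  have "{Q. c1 Q + c2 Q \<noteq> 0} \<subseteq> {Q. c1 Q \<noteq> 0} \<union> {Q. c2 Q \<noteq> 0}" by auto
  then show "finite {Q. c1 Q + c2 Q \<noteq> 0}" using c1 c2 by (auto intro: finite_subset)
  fix Q assume "c1 Q + c2 Q \<noteq> 0"
  then show "Q \<in> elem_cubes d k X" using c1 c2 by (cases "c1 Q = 0") auto
qed

lemma chains_smult: "c \<in> chains d k X \<Longrightarrow> (\<lambda>Q. j * c Q) \<in> chains d k X"
  unfolding chains_def
proof (intro CollectI conjI allI impI)
  assume c: "c \<in> {c. finite {Q. c Q \<noteq> 0} \<and> (\<forall>Q. c Q \<noteq> 0 \<longrightarrow> Q \<in> elem_cubes d k X)}"
  have "{Q. j * c Q \<noteq> 0} \<subseteq> {Q. c Q \<noteq> 0}" by auto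
  then show "finite {Q. j * c Q \<noteq> 0}" using c by (auto intro: finite_subset)
  fix Q assume "j * c Q \<noteq> 0"
  then show "Q \<in> elem_cubes d k X" using c by auto
qed

lemma boundary_add:
  assumes "finite {Q. c1 Q \<noteq> 0}" "finite {Q. c2 Q \<noteq> 0}"
  shows "boundary (\<lambda>Q. c1 Q + c2 Q) = (\<lambda>P. boundary c1 P + boundary c2 P)"
proof
  fix P
  define F where "F = {Q. c1 Q \<noteq> 0} \<union> {Q. c2 Q \<noteq> 0}"
  have F: "finite F" using assms by (simp add: F_def)
  have "boundary (\<lambda>Q. c1 Q + c2 Q) P = (\<Sum>Q\<in>F. (c1 Q + c2 Q) * bd_coeff Q P)"
    by (rule boundary_eq[OF F]) (auto simp: F_def)
  also have "\<dots> = (\<Sum>Q\<in>F. c1 Q * bd_coeff Q P) + (\<Sum>Q\<in>F. c2 Q * bd_coeff Q P)"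
    by (simp add: distrib_right sum.distrib)
  also have "(\<Sum>Q\<in>F. c1 Q * bd_coeff Q P) = boundary c1 P"
    by (rule boundary_eq[OF F, symmetric]) (auto simp: F_def)
  also have "(\<Sum>Q\<in>F. c2 Q * bd_coeff Q P) = boundary c2 P"
    by (rule boundary_eq[OF F, symmetric]) (auto simp: F_def)
  finally show "boundary (\<lambda>Q. c1 Q + c2 Q) P = boundary c1 P + boundary c2 P" .
qed

lemma boundary_smult:
  assumes "finite {Q. c Q \<noteq> 0}"
  shows "boundary (\<lambda>Q. j * c Q) = (\<lambda>P. j * boundary c P)"
proof
  fix P
  have "boundary (\<lambda>Q. j * c Q) P = (\<Sum>Q\<in>{Q. c Q \<noteq> 0}. (j * c Q) * bd_coeff Q P)"
    by (rule boundary_eq[OF assms]) auto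
  also have "\<dots> = j * (\<Sum>Q\<in>{Q. c Q \<noteq> 0}. c Q * bd_coeff Q P)"
    by (simp add: sum_distrib_left mult.assoc)
  finally show "boundary (\<lambda>Q. j * c Q) P = j * boundary c P" by (simp add: boundary_def)
qed

lemma chains_finite: "c \<in> chains d k X \<Longrightarrow> finite {Q. c Q \<noteq> 0}"
  unfolding chains_def by simp

lemma submod_bdries: "submod (bdries d k X)"
  unfolding submod_def
proof (intro conjI ballI allI)
  show "(\<lambda>_. 0) \<in> bdries d k X" by (rule zero_bdries)
next
  fix x y assume "x \<in> bdries d k X" "y \<in> bdries d k X"
  then obtain c1 c2 where c: "c1 \<in> chains d (Suc k) X" "c2 \<in> chains d (Suc k) X" "x = boundary c1" "y = boundary c2"
    unfolding bdries_def by blast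
  then have "(\<lambda>Q. x Q + y Q) = boundary (\<lambda>Q. c1 Q + c2 Q)"
    using boundary_add[OF chains_finite chains_finite] by simp
  then show "(\<lambda>Q. x Q + y Q) \<in> bdries d k X"
    unfolding bdries_def using chains_add[OF c(1,2)] by blast
next
  fix x and j :: int assume "x \<in> bdries d k X"
  then obtain c where c: "c \<in> chains d (Suc k) X" "x = boundary c"
    unfolding bdries_def by blast
  then have "(\<lambda>Q. j * x Q) = boundary (\<lambda>Q. j * c Q)"
    using boundary_smult[OF chains_finite] by simp
  then show "(\<lambda>Q. j * x Q) \<in> bdries d k X"
    unfolding bdries_def using chains_smult[OF c(1)] by blast
qed

definition fam :: "nat \<Rightarrow> nat \<Rightarrow> (nat \<Rightarrow> real) set \<Rightarrow> (cube \<Rightarrow> int) set \<Rightarrow> bool" where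
  "fam d k X S \<longleftrightarrow> finite S \<and> S \<subseteq> cycles d k X \<and> indepZ (bdries d k X) S"

lemma betti_fam: "betti d k X = Sup {card S | S. fam d k X S}"
  unfolding betti_def fam_def indepZ_def by simp

lemma fam_card:
  assumes "finite (elem_cubes d k X)" "fam d k X S"
  shows "card S \<le> card (elem_cubes d k X)"
proof -
  have S: "finite S" "S \<subseteq> cycles d k X" "indepZ (bdries d k X) S" using assms(2) unfolding fam_def by auto
  have "{\<lambda>_. 0} \<subseteq> bdries d k X" using zero_bdries by blast
  then have i: "indepZ {\<lambda>_. 0} S" using S(3) by (rule indepZ_mono)
  have s: "\<forall>s\<in>S. \<forall>Q. s Q \<noteq> 0 \<longrightarrow> Q \<in> elem_cubes d k X"
  proof (intro ballI allI impI)
    fix s Q assume "s \<in> S" "s Q \<noteq> 0"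
    then have "s \<in> Defs.chains d k X" using S(2) unfolding cycles_def by auto
    then show "Q \<in> elem_cubes d k X" using \<open>s Q \<noteq> 0\<close> unfolding Defs.chains_def by auto
  qed
  show ?thesis by (rule rank_bound[OF assms(1) S(1) s i])
qed

lemma betti_ge:
  assumes "finite (elem_cubes d k X)" "fam d k X S"
  shows "card S \<le> betti d k X"
proof -
  have "bdd_above {card S | S. fam d k X S}"
    using fam_card[OF assms(1)] by (intro bdd_aboveI[of _ "card (elem_cubes d k X)"]) blast
  then show ?thesis unfolding betti_fam using assms(2) by (intro cSup_upper) blast+
qed

lemma fam_empty: "fam d k X {}"
  unfolding fam_def indepZ_def by simp

lemma betti_obtain:
  assumes "finite (elem_cubes d k X)"
  obtains S where "fam d k X S" "card S = betti d k X"
proof -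
  have bdd: "bdd_above {card S | S. fam d k X S}"
    using fam_card[OF assms(1)] by (intro bdd_aboveI[of _ "card (elem_cubes d k X)"]) blast
  have ne: "{card S | S. fam d k X S} \<noteq> {}" using fam_empty by blast
  have fin: "finite {card S | S. fam d k X S}" using bdd by (simp add: bdd_above_nat)
  have "Sup {card S | S. fam d k X S} = Max {card S | S. fam d k X S}"
    unfolding Sup_nat_def by (rule if_not_P[OF ne])
  then have "Sup {card S | S. fam d k X S} \<in> {card S | S. fam d k X S}"
    using Max_in[OF fin ne] by simp
  then obtain S where "fam d k X S" "Sup {card S | S. fam d k X S} = card S" by blast
  then show ?thesis using that[of S] betti_fam[of d k X] by simp
qed

lemma elem_cubes_mono: "A \<subseteq> Y \<Longrightarrow> elem_cubes d k A \<subseteq> elem_cubes d k Y"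
  unfolding elem_cubes_def by auto

lemma chains_mono: "A \<subseteq> Y \<Longrightarrow> chains d k A \<subseteq> chains d k Y"
  unfolding chains_def using elem_cubes_mono by blast

lemma cycles_mono: "A \<subseteq> Y \<Longrightarrow> cycles d k A \<subseteq> cycles d k Y"
  unfolding cycles_def using chains_mono by blast

lemma betti_drop:
  assumes AY: "A \<subseteq> Y" and f1: "finite (elem_cubes d q Y)" and f2: "finite (elem_cubes d (Suc q) Y)"
  shows "betti d q A \<le> betti d q Y + card (elem_cubes d (Suc q) Y - elem_cubes d (Suc q) A)"
proof -
  have fA: "finite (elem_cubes d q A)" using f1 elem_cubes_mono[OF AY] finite_subset by blast
  obtain S where S: "fam d q A S" "card S = betti d q A" using betti_obtain[OF fA] by blast
  define N where "N = elem_cubes d (Suc q) Y - elem_cubes d (Suc q) A"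
  define g where "g e = boundary (\<lambda>Q. if Q = e then 1 else 0)" for e
  have fN: "finite N" using f2 by (simp add: N_def)
  have incl: "bdries d q Y \<subseteq> {\<lambda>P. b P + (\<Sum>e\<in>N. k e * g e P) | b k. b \<in> bdries d q A}"
  proof
    fix x assume "x \<in> bdries d q Y"
    then obtain c where c: "c \<in> chains d (Suc q) Y" "x = boundary c" unfolding bdries_def by blast
    define cA where "cA Q = (if Q \<in> N then 0 else c Q)" for Q
    have supp: "\<And>Q. c Q \<noteq> 0 \<Longrightarrow> Q \<in> elem_cubes d (Suc q) Y" using c(1) unfolding chains_def by blast
    have cA: "cA \<in> chains d (Suc q) A"
      unfolding chains_def
    proof (intro CollectI conjI allI impI)
      show "finite {Q. cA Q \<noteq> 0}"
        using chains_finite[OF c(1)] by (rule finite_subset[rotated]) (auto simp: cA_def)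
      fix Q assume "cA Q \<noteq> 0"
      then show "Q \<in> elem_cubes d (Suc q) A" using supp by (auto simp: cA_def N_def split: if_splits)
    qed
    have "x = (\<lambda>P. boundary cA P + (\<Sum>e\<in>N. c e * g e P))"
    proof
      fix P
      define F where "F = elem_cubes d (Suc q) Y"
      have F: "finite F" "N \<subseteq> F" using f2 by (auto simp: F_def N_def)
      have "x P = (\<Sum>Q\<in>F. c Q * bd_coeff Q P)" unfolding c(2)
        by (rule boundary_eq[OF F(1)]) (auto simp: F_def intro: supp)
      also have "\<dots> = (\<Sum>Q\<in>F - N. c Q * bd_coeff Q P) + (\<Sum>Q\<in>N. c Q * bd_coeff Q P)"
        by (rule sum.subset_diff[OF F(2) F(1)])
      also have "(\<Sum>Q\<in>F - N. c Q * bd_coeff Q P) = (\<Sum>Q\<in>F - N. cA Q * bd_coeff Q P)"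
        by (intro sum.cong) (auto simp: cA_def)
      also have "\<dots> = boundary cA P"
      proof (rule boundary_eq[symmetric])
        show "finite (F - N)" using F(1) by simp
        show "{Q. cA Q \<noteq> 0} \<subseteq> F - N"
        proof
          fix Q assume "Q \<in> {Q. cA Q \<noteq> 0}"
          then have "Q \<notin> N" "c Q \<noteq> 0" by (auto simp: cA_def split: if_splits)
          then show "Q \<in> F - N" using supp unfolding F_def by blast
        qed
      qed
      also have "(\<Sum>Q\<in>N. c Q * bd_coeff Q P) = (\<Sum>e\<in>N. c e * g e P)"
      proof (intro sum.cong refl)
        fix e assume "e \<in> N"
        have "g e P = (\<Sum>Q\<in>{e}. (if Q = e then 1 else 0) * bd_coeff Q P)"
          unfolding g_def by (rule boundary_eq) auto
        then show "c e * bd_coeff e P = c e * g e P" by simp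
      qed
      finally show "x P = boundary cA P + (\<Sum>e\<in>N. c e * g e P)" .
    qed
    moreover have "boundary cA \<in> bdries d q A" unfolding bdries_def using cA by blast
    ultimately show "x \<in> {\<lambda>P. b P + (\<Sum>e\<in>N. k e * g e P) | b k. b \<in> bdries d q A}"
      by (intro CollectI exI[of _ "boundary cA"] exI[of _ c]) simp
  qed
  have "\<exists>S'\<subseteq>S. card S \<le> card S' + card N \<and> indepZ (bdries d q Y) S'"
    using drop[OF fN submod_bdries _ _ incl] S(1) unfolding fam_def by blast
  then obtain S' where S': "S' \<subseteq> S" "card S \<le> card S' + card N" "indepZ (bdries d q Y) S'" by blast
  have "fam d q Y S'"
    unfolding fam_def using S' S(1) cycles_mono[OF AY] finite_subset unfolding fam_def by blast
  then have "card S' \<le> betti d q Y" by (rule betti_ge[OF f1])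
  then show ?thesis unfolding N_def[symmetric] using S(2) S'(2) by linarith
qed



lemma shift_len[simp]: "length (shift_cube y Q) = min (length Q) (length y)"
  unfolding shift_cube_def by simp

lemma shift_nth: "i < length Q \<Longrightarrow> i < length y \<Longrightarrow> shift_cube y Q ! i = (fst (Q!i) + y!i, snd (Q!i))"
  unfolding shift_cube_def by (simp add: case_prod_beta)

lemma shift_inv: "length Q = length y \<Longrightarrow> shift_cube (map uminus y) (shift_cube y Q) = Q"
  by (intro nth_equalityI) (auto simp: shift_nth)

lemma shift_upd: "length Q = length y \<Longrightarrow> i < length Q \<Longrightarrow>
  shift_cube y (Q[i := (l, b)]) = (shift_cube y Q)[i := (l + y!i, b)]"
  by (intro nth_equalityI) (auto simp: shift_nth nth_list_update)

lemma shift_snd: "length Q = length y \<Longrightarrow> map snd (shift_cube y Q) = map snd Q"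
  by (intro nth_equalityI) (auto simp: shift_nth)

lemma len_filter_snd: "length (filter snd xs) = length (filter id (map snd xs))"
  by (induction xs) auto

lemma shift_eq_iff: "length P = length y \<Longrightarrow> length Z = length y \<Longrightarrow>
  (P = shift_cube y Z) = (shift_cube (map uminus y) P = Z)"
  using shift_inv[of Z y] shift_inv[of P "map uminus y"] by auto

lemma bd_coeff_shift:
  assumes "length R = length y" "length P = length y"
  shows "bd_coeff (shift_cube y R) P = bd_coeff R (shift_cube (map uminus y) P)"
  unfolding bd_coeff_def
proof (intro sum.cong)
  show "{..<length (shift_cube y R)} = {..<length R}" using assms by simp
next
  fix i assume i: "i \<in> {..<length R}"
  then have i': "i < length R" "i < length y" using assms by auto
  have sn: "snd (shift_cube y R ! i) = snd (R!i)" "fst (shift_cube y R ! i) = fst (R!i) + y!i"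
    using shift_nth[OF i'] by auto
  have tk: "length (filter snd (take i (shift_cube y R))) = length (filter snd (take i R))"
    unfolding len_filter_snd take_map[symmetric] shift_snd[OF assms(1)] ..
  have e1: "(P = (shift_cube y R)[i := (fst (R!i) + y!i + 1, False)]) =
      (shift_cube (map uminus y) P = R[i := (fst (R!i) + 1, False)])"
    using shift_upd[OF assms(1) i'(1), of "fst (R!i) + 1" False] shift_eq_iff[of P y "R[i := (fst (R!i) + 1, False)]"] assms
    by (simp add: algebra_simps)
  have e2: "(P = (shift_cube y R)[i := (fst (R!i) + y!i, False)]) =
      (shift_cube (map uminus y) P = R[i := (fst (R!i), False)])"
    using shift_upd[OF assms(1) i'(1), of "fst (R!i)" False] shift_eq_iff[of P y "R[i := (fst (R!i), False)]"] assms
    by (simp add: algebra_simps)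
  show "(if snd (shift_cube y R ! i)
         then (- 1) ^ length (filter snd (take i (shift_cube y R))) *
              ((if P = (shift_cube y R)[i := (fst (shift_cube y R ! i) + 1, False)] then 1 else 0) -
               (if P = (shift_cube y R)[i := (fst (shift_cube y R ! i), False)] then 1 else 0))
         else 0) =
        (if snd (R ! i)
         then (- 1) ^ length (filter snd (take i R)) *
              ((if shift_cube (map uminus y) P = R[i := (fst (R ! i) + 1, False)] then 1 else 0) -
               (if shift_cube (map uminus y) P = R[i := (fst (R ! i), False)] then 1 else 0))
         else 0)"
    unfolding sn tk using e1 e2 by (simp add: algebra_simps)
qed

lemma bd_coeff_len: "length P \<noteq> length Q \<Longrightarrow> bd_coeff Q P = 0"
  unfolding bd_coeff_def by (intro sum.neutral) auto



definition tr :: "int list \<Rightarrow> (nat \<Rightarrow> real) \<Rightarrow> (nat \<Rightarrow> real)" where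
  "tr y p = (\<lambda>i. p i + (if i < length y then real_of_int (y!i) else 0))"

lemma tr_inv[simp]: "tr (map uminus y) (tr y p) = p"
  unfolding tr_def by auto

lemma tr_tr: "tr (map uminus y) ` tr y ` X = X"
  by (simp add: image_image)

lemma cube_set_shift:
  assumes "length Q = length y"
  shows "cube_set (shift_cube y Q) = tr y ` cube_set Q"
proof
  show "tr y ` cube_set Q \<subseteq> cube_set (shift_cube y Q)"
  proof
    fix p assume "p \<in> tr y ` cube_set Q"
    then obtain p0 where p0: "p0 \<in> cube_set Q" "p = tr y p0" by auto
    show "p \<in> cube_set (shift_cube y Q)"
      unfolding cube_set_def using p0 assms by (auto simp: cube_set_def tr_def shift_nth)
  qed
next
  show "cube_set (shift_cube y Q) \<subseteq> tr y ` cube_set Q"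
  proof
    fix p assume p: "p \<in> cube_set (shift_cube y Q)"
    have "tr (map uminus y) p \<in> cube_set Q"
      using p assms by (auto simp: cube_set_def tr_def shift_nth)
    moreover have "p = tr y (tr (map uminus y) p)"
      using tr_inv[of "map uminus y" p] by simp
    ultimately show "p \<in> tr y ` cube_set Q" by blast
  qed
qed

lemma cube_dim_shift: "length Q = length y \<Longrightarrow> cube_dim (shift_cube y Q) = cube_dim Q"
  unfolding cube_dim_def len_filter_snd shift_snd ..

lemma elem_cubes_tr:
  assumes y: "length y = d"
  shows "elem_cubes d k (tr y ` X) = shift_cube y ` elem_cubes d k X"
proof
  show "shift_cube y ` elem_cubes d k X \<subseteq> elem_cubes d k (tr y ` X)"
  proof
    fix Q' assume "Q' \<in> shift_cube y ` elem_cubes d k X"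
    then obtain Q where Q: "Q \<in> elem_cubes d k X" "Q' = shift_cube y Q" by auto
    have l: "length Q = length y" using Q y by (simp add: elem_cubes_def cubesK_def)
    show "Q' \<in> elem_cubes d k (tr y ` X)"
      using Q l y cube_set_shift[OF l] cube_dim_shift[OF l]
      by (auto simp: elem_cubes_def cubesK_def)
  qed
next
  show "elem_cubes d k (tr y ` X) \<subseteq> shift_cube y ` elem_cubes d k X"
  proof
    fix Q' assume Q': "Q' \<in> elem_cubes d k (tr y ` X)"
    define Q where "Q = shift_cube (map uminus y) Q'"
    have l': "length Q' = length (map uminus y)" using Q' y by (simp add: elem_cubes_def cubesK_def)
    have l: "length Q = length y" using l' by (simp add: Q_def)
    have QQ: "Q' = shift_cube y Q"
      unfolding Q_def using shift_inv[OF l'] by simp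
    have "cube_set Q = tr (map uminus y) ` cube_set Q'"
      unfolding Q_def by (rule cube_set_shift[OF l'])
    also have "\<dots> \<subseteq> tr (map uminus y) ` tr y ` X" using Q' by (auto simp: elem_cubes_def)
    finally have "cube_set Q \<subseteq> X" by (simp add: image_image)
    moreover have "cube_dim Q = k" using Q' cube_dim_shift[OF l] QQ by (simp add: elem_cubes_def)
    ultimately have "Q \<in> elem_cubes d k X" using l y by (simp add: elem_cubes_def cubesK_def)
    then show "Q' \<in> shift_cube y ` elem_cubes d k X" using QQ by blast
  qed
qed

definition Phi :: "nat \<Rightarrow> int list \<Rightarrow> (cube \<Rightarrow> int) \<Rightarrow> (cube \<Rightarrow> int)" where
  "Phi d y c = (\<lambda>Q. if length Q = d then c (shift_cube (map uminus y) Q) else 0)"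

lemma chains_len: "c \<in> Defs.chains d k X \<Longrightarrow> c Q \<noteq> 0 \<Longrightarrow> length Q = d"
  unfolding Defs.chains_def elem_cubes_def cubesK_def by auto

lemma Phi_inv:
  assumes "\<And>Q. c Q \<noteq> 0 \<Longrightarrow> length Q = d" "length y = d"
  shows "Phi d (map uminus y) (Phi d y c) = c"
proof
  fix Q
  show "Phi d (map uminus y) (Phi d y c) Q = c Q"
  proof (cases "length Q = d")
    case True
    then show ?thesis using shift_inv[of Q y] assms(2) by (simp add: Phi_def)
  next
    case False
    then show ?thesis using assms(1) by (auto simp: Phi_def)
  qed
qed

lemma chains_Phi:
  assumes y: "length y = d" and c: "c \<in> Defs.chains d k X"
  shows "Phi d y c \<in> Defs.chains d k (tr y ` X)"
proof -
  have sub: "{Q. Phi d y c Q \<noteq> 0} \<subseteq> shift_cube y ` {Q. c Q \<noteq> 0}"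
  proof
    fix Q assume "Q \<in> {Q. Phi d y c Q \<noteq> 0}"
    then have l: "length Q = d" and nz: "c (shift_cube (map uminus y) Q) \<noteq> 0"
      by (auto simp: Phi_def split: if_splits)
    have "Q = shift_cube y (shift_cube (map uminus y) Q)"
      using shift_inv[of Q "map uminus y"] l y by simp
    then show "Q \<in> shift_cube y ` {Q. c Q \<noteq> 0}" using nz by blast
  qed
  have "finite {Q. Phi d y c Q \<noteq> 0}"
    using chains_finite[OF c] by (rule finite_subset[OF sub finite_imageI])
  moreover have "Q \<in> elem_cubes d k (tr y ` X)" if nzQ: "Phi d y c Q \<noteq> 0" for Q
  proof -
    obtain R where R: "c R \<noteq> 0" "Q = shift_cube y R" using sub nzQ by blast
    have "R \<in> elem_cubes d k X" using c R(1) unfolding Defs.chains_def by blast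
    then show ?thesis unfolding elem_cubes_tr[OF y] R(2) by blast
  qed
  ultimately show ?thesis unfolding Defs.chains_def by blast
qed

lemma boundary_Phi:
  assumes y: "length y = d" and c: "c \<in> Defs.chains d k X"
  shows "boundary (Phi d y c) = Phi d y (boundary c)"
proof
  fix P
  define F where "F = {Q. c Q \<noteq> 0}"
  have F: "finite F" using chains_finite[OF c] by (simp add: F_def)
  have lF: "\<And>R. R \<in> F \<Longrightarrow> length R = d" using chains_len[OF c] by (auto simp: F_def)
  have inj: "inj_on (shift_cube y) F"
  proof
    fix R R' assume "R \<in> F" "R' \<in> F" "shift_cube y R = shift_cube y R'"
    then show "R = R'" using shift_inv[of R y] shift_inv[of R' y] lF y by metis
  qed
  have sub: "{Q. Phi d y c Q \<noteq> 0} \<subseteq> shift_cube y ` F"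
  proof
    fix Q assume "Q \<in> {Q. Phi d y c Q \<noteq> 0}"
    then have l: "length Q = d" and nz: "c (shift_cube (map uminus y) Q) \<noteq> 0"
      by (auto simp: Phi_def split: if_splits)
    have "Q = shift_cube y (shift_cube (map uminus y) Q)"
      using shift_inv[of Q "map uminus y"] l y by simp
    then show "Q \<in> shift_cube y ` F" using nz F_def by blast
  qed
  have "boundary (Phi d y c) P = (\<Sum>Q\<in>shift_cube y ` F. Phi d y c Q * bd_coeff Q P)"
    by (rule boundary_eq[OF finite_imageI[OF F] sub])
  also have "\<dots> = (\<Sum>R\<in>F. Phi d y c (shift_cube y R) * bd_coeff (shift_cube y R) P)"
    by (simp add: sum.reindex[OF inj])
  also have "\<dots> = (\<Sum>R\<in>F. c R * bd_coeff (shift_cube y R) P)"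
    by (intro sum.cong refl) (simp add: Phi_def lF y shift_inv)
  also have "\<dots> = Phi d y (boundary c) P"
  proof (cases "length P = d")
    case True
    have "(\<Sum>R\<in>F. c R * bd_coeff (shift_cube y R) P) = (\<Sum>R\<in>F. c R * bd_coeff R (shift_cube (map uminus y) P))"
      by (intro sum.cong refl) (simp add: bd_coeff_shift lF y True)
    also have "\<dots> = boundary c (shift_cube (map uminus y) P)" unfolding boundary_def F_def ..
    finally show ?thesis using True by (simp add: Phi_def)
  next
    case False
    have "(\<Sum>R\<in>F. c R * bd_coeff (shift_cube y R) P) = 0"
      by (intro sum.neutral ballI) (simp add: bd_coeff_len lF y False)
    then show ?thesis using False by (simp add: Phi_def)
  qed
  finally show "boundary (Phi d y c) P = Phi d y (boundary c) P" .
qed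

lemma Phi_sum: "Phi d y (\<lambda>Q. \<Sum>s\<in>S. a s * s Q) = (\<lambda>Q. \<Sum>s\<in>S. a s * Phi d y s Q)"
  unfolding Phi_def by auto

lemma fam_Phi:
  assumes y: "length y = d" and S: "fam d k X S"
  shows "fam d k (tr y ` X) (Phi d y ` S) \<and> card (Phi d y ` S) = card S"
proof -
  have S1: "finite S" "S \<subseteq> cycles d k X" "indepZ (bdries d k X) S" using S unfolding fam_def by auto
  have ch: "\<And>s. s \<in> S \<Longrightarrow> s \<in> Defs.chains d k X" using S1(2) unfolding cycles_def by auto
  have inj: "inj_on (Phi d y) S"
  proof
    fix s s' assume "s \<in> S" "s' \<in> S" "Phi d y s = Phi d y s'"
    then show "s = s'" using Phi_inv[of s d y] Phi_inv[of s' d y] chains_len[OF ch] y by metis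
  qed
  have cyc: "Phi d y ` S \<subseteq> cycles d k (tr y ` X)"
  proof
    fix u assume "u \<in> Phi d y ` S"
    then obtain s where s: "s \<in> S" "u = Phi d y s" by auto
    have "boundary s = (\<lambda>_. 0)" using S1(2) s(1) unfolding cycles_def by auto
    then have "boundary u = (\<lambda>_. 0)" using boundary_Phi[OF y ch[OF s(1)]] s(2) by (simp add: Phi_def)
    then show "u \<in> cycles d k (tr y ` X)" using chains_Phi[OF y ch[OF s(1)]] s(2) unfolding cycles_def by blast
  qed
  have ind: "indepZ (bdries d k (tr y ` X)) (Phi d y ` S)"
    unfolding indepZ_def
  proof (intro allI impI ballI)
    fix a :: "(cube \<Rightarrow> int) \<Rightarrow> int" and u
    assume h: "(\<lambda>Q. \<Sum>s\<in>Phi d y ` S. a s * s Q) \<in> bdries d k (tr y ` X)" and u: "u \<in> Phi d y ` S"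
    define z where "z = (\<lambda>Q. \<Sum>s\<in>S. a (Phi d y s) * s Q)"
    have "(\<lambda>Q. \<Sum>s\<in>Phi d y ` S. a s * s Q) = Phi d y z"
      unfolding z_def Phi_sum by (simp add: sum.reindex[OF inj])
    with h obtain c' where c': "c' \<in> Defs.chains d (Suc k) (tr y ` X)" "Phi d y z = boundary c'"
      unfolding bdries_def by auto
    have zl: "\<And>Q. z Q \<noteq> 0 \<Longrightarrow> length Q = d"
    proof (rule ccontr)
      fix Q assume "z Q \<noteq> 0" "length Q \<noteq> d"
      then have z0: "\<And>s. s \<in> S \<Longrightarrow> s Q = 0" using chains_len[OF ch] by blast
      have "z Q = 0" unfolding z_def by (intro sum.neutral ballI) (simp add: z0)
      then show False using \<open>z Q \<noteq> 0\<close> by simp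
    qed
    have ly: "length (map uminus y) = d" using y by simp
    have "z = Phi d (map uminus y) (Phi d y z)" using Phi_inv[OF zl y] by simp
    also have "\<dots> = Phi d (map uminus y) (boundary c')" using c'(2) by simp
    also have "\<dots> = boundary (Phi d (map uminus y) c')" using boundary_Phi[OF ly c'(1)] by simp
    finally have "z \<in> bdries d k X"
      using chains_Phi[OF ly c'(1)] unfolding bdries_def tr_tr by blast
    then have "\<forall>s\<in>S. a (Phi d y s) = 0" using indepZD[OF S1(3), of "\<lambda>s. a (Phi d y s)"] unfolding z_def by blast
    then show "a u = 0" using u by auto
  qed
  show ?thesis using cyc ind S1(1) card_image[OF inj] unfolding fam_def by auto
qed

lemma betti_tr:
  assumes y: "length y = d"
  shows "betti d k (tr y ` X) = betti d k X"
proof -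
  have ly: "length (map uminus y) = d" using y by simp
  have "{card S | S. fam d k X S} = {card S | S. fam d k (tr y ` X) S}"
  proof
    show "{card S | S. fam d k X S} \<subseteq> {card S | S. fam d k (tr y ` X) S}"
      using fam_Phi[OF y] by (smt (verit) Collect_mono)
    show "{card S | S. fam d k (tr y ` X) S} \<subseteq> {card S | S. fam d k X S}"
      using fam_Phi[OF ly, of k "tr y ` X"] unfolding tr_tr by (smt (verit) Collect_mono)
  qed
  then show ?thesis unfolding betti_fam by simp
qed



abbreviation hi :: "cube \<Rightarrow> nat \<Rightarrow> int" where
  "hi Q i \<equiv> fst (Q!i) + (if snd (Q!i) then 1 else 0)"

lemma box_iff:
  assumes "length Q = d"
  shows "cube_set Q \<subseteq> box d x K \<longleftrightarrow>
    (\<forall>i<d. x!i - int K \<le> fst (Q!i) \<and> hi Q i \<le> x!i + int K)"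
proof
  assume h: "cube_set Q \<subseteq> box d x K"
  show "\<forall>i<d. x!i - int K \<le> fst (Q!i) \<and> hi Q i \<le> x!i + int K"
  proof (intro allI impI conjI)
    fix i assume i: "i < d"
    define lo where "lo j = (if j < d then real_of_int (fst (Q!j)) else 0)" for j
    define up where "up j = (if j < d then real_of_int (hi Q j) else 0)" for j
    have "lo \<in> cube_set Q" using assms by (auto simp: cube_set_def lo_def)
    then have "lo \<in> box d x K" using h by blast
    then have "real_of_int (x!i) - real K \<le> real_of_int (fst (Q!i))" using i by (auto simp: box_def lo_def)
    then show "x!i - int K \<le> fst (Q!i)" by linarith
    have "up \<in> cube_set Q" using assms by (auto simp: cube_set_def up_def)
    then have "up \<in> box d x K" using h by blast
    then have "real_of_int (hi Q i) \<le> real_of_int (x!i) + real K" using i by (auto simp: box_def up_def)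
    then show "hi Q i \<le> x!i + int K" by linarith
  qed
next
  assume h: "\<forall>i<d. x!i - int K \<le> fst (Q!i) \<and> hi Q i \<le> x!i + int K"
  show "cube_set Q \<subseteq> box d x K"
  proof
    fix p assume p: "p \<in> cube_set Q"
    have "real_of_int (x!i) - real K \<le> p i \<and> p i \<le> real_of_int (x!i) + real K" if i: "i < d" for i
    proof -
      have a: "x!i - int K \<le> fst (Q!i)" "hi Q i \<le> x!i + int K" using h i by auto
      have b: "real_of_int (fst (Q!i)) \<le> p i" "p i \<le> real_of_int (fst (Q!i)) + (if snd (Q!i) then 1 else 0)"
        using p i assms by (auto simp: cube_set_def)
      have c: "real_of_int (x!i) - real K \<le> real_of_int (fst (Q!i))" using a(1) by linarith
      have a2: "real_of_int (hi Q i) \<le> real_of_int (x!i) + real K"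
        using a(2) by (metis of_int_add of_int_le_iff of_int_of_nat_eq)
      have e: "real_of_int (fst (Q!i)) + (if snd (Q!i) then 1 else 0) \<le> real_of_int (x!i) + real K"
        using a2 by (cases "snd (Q!i)") simp_all
      show ?thesis using b c e by linarith
    qed
    moreover have "\<forall>i. d \<le> i \<longrightarrow> p i = 0" using p assms by (auto simp: cube_set_def)
    ultimately show "p \<in> box d x K" by (auto simp: box_def)
  qed
qed

lemma Lbox_iff: "Q \<in> Lbox d x K \<longleftrightarrow> length Q = d \<and> (\<forall>i<d. x!i - int K \<le> fst (Q!i) \<and> hi Q i \<le> x!i + int K)"
  by (cases "length Q = d") (simp_all add: Lbox_def cubesK_def box_iff)

lemma Lbox_finite: "finite (Lbox d x K)"
proof -
  define M where "M = (\<Sum>i<d. \<bar>x!i\<bar>) + int K"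
  have "Lbox d x K \<subseteq> {Q. set Q \<subseteq> {-M..M} \<times> UNIV \<and> length Q = d}"
  proof
    fix Q assume Q: "Q \<in> Lbox d x K"
    have "set Q \<subseteq> {-M..M} \<times> UNIV"
    proof
      fix z assume "z \<in> set Q"
      then obtain i where i: "i < length Q" "z = Q!i" by (auto simp: in_set_conv_nth)
      have l: "length Q = d" using Q by (simp add: Lbox_iff)
      have "\<bar>x!i\<bar> \<le> (\<Sum>i<d. \<bar>x!i\<bar>)" using i l by (intro member_le_sum) auto
      then show "z \<in> {-M..M} \<times> UNIV" using Q i l unfolding Lbox_iff M_def
        by (cases "snd (Q!i)") (force simp: mem_Times_iff)+
    qed
    then show "Q \<in> {Q. set Q \<subseteq> {-M..M} \<times> UNIV \<and> length Q = d}" using Q by (simp add: Lbox_iff)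
  qed
  moreover have "finite {Q. set Q \<subseteq> {-M..M} \<times> (UNIV :: bool set) \<and> length Q = d}"
    by (intro finite_lists_length_eq) simp
  ultimately show ?thesis by (rule finite_subset)
qed

lemma elem_cubes_box_finite: "X \<subseteq> box d x K \<Longrightarrow> finite (elem_cubes d k X)"
  by (rule finite_subset[OF _ Lbox_finite[of d x K]]) (auto simp: elem_cubes_def Lbox_def)



lemma int_lt_of_real: "real_of_int m < real_of_int l + 1 \<Longrightarrow> m \<le> l"
proof -
  assume "real_of_int m < real_of_int l + 1"
  then have "real_of_int m < real_of_int (l + 1)" by simp
  then have "m < l + 1" by (simp only: of_int_less_iff)
  then show ?thesis by simp
qed

lemma coord_lemma:
  fixes l m n :: int and b e :: bool and c :: real
  assumes m1: "real_of_int m \<le> c" and m2: "c \<le> real_of_int m + (if e then 1 else 0)"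
    and cdef: "c = real_of_int l + (if b then 1/2 else 0)"
    and l1: "-n \<le> l" and l2: "l + (if b then 1 else 0) \<le> n" and nb: "b \<or> (l \<noteq> n \<and> l \<noteq> -n)"
  shows "-n \<le> m \<and> m + (if e then 1 else 0) \<le> n"
    and "\<And>p. real_of_int l \<le> p \<Longrightarrow> p \<le> real_of_int l + (if b then 1 else 0) \<Longrightarrow>
           real_of_int m \<le> p \<and> p \<le> real_of_int m + (if e then 1 else 0)"
proof -
  have A: "(if b then m = l \<and> e else m \<le> l \<and> l \<le> m + (if e then 1 else 0))"
  proof (cases b)
    case True
    then have c: "c = real_of_int l + 1/2" using cdef by simp
    have "m \<le> l" using m1 c by (intro int_lt_of_real) linarith
    moreover have e: "e"
    proof (rule ccontr)
      assume "\<not> e"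
      then have "real_of_int l + 1/2 \<le> real_of_int m" using m2 c by simp
      then have "real_of_int l < real_of_int m" by linarith
      then show False using \<open>m \<le> l\<close> by (simp only: of_int_less_iff)
    qed
    moreover have "l \<le> m"
    proof -
      have "c \<le> real_of_int m + 1" using m2 e by simp
      then show ?thesis using c by (intro int_lt_of_real) linarith
    qed
    ultimately show ?thesis using True by simp
  next
    case False
    then have c: "c = real_of_int l" using cdef by simp
    have "m \<le> l" using m1 c by (simp only: of_int_le_iff)
    moreover have "l \<le> m + (if e then 1 else 0)"
    proof -
      have "real_of_int l \<le> real_of_int (m + (if e then 1 else 0))" using m2 c by (cases e) simp_all
      then show ?thesis by (simp only: of_int_le_iff)
    qed
    ultimately show ?thesis using False by simp
  qed
  show "-n \<le> m \<and> m + (if e then 1 else 0) \<le> n"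
    using A l1 l2 nb by (cases b; cases e) auto
  fix p assume p1: "real_of_int l \<le> p" and p2: "p \<le> real_of_int l + (if b then 1 else 0)"
  show "real_of_int m \<le> p \<and> p \<le> real_of_int m + (if e then 1 else 0)"
  proof (cases b)
    case True
    then show ?thesis using A p1 p2 by simp
  next
    case False
    then have p: "p = real_of_int l" using p1 p2 by simp
    have "real_of_int m \<le> real_of_int l" using A False by simp
    moreover have "real_of_int l \<le> real_of_int (m + (if e then 1 else 0))"
      using A False by (simp only: of_int_le_iff if_False)
    ultimately show ?thesis using p by (cases e) simp_all
  qed
qed

definition Bd :: "nat \<Rightarrow> nat \<Rightarrow> cube set" where
  "Bd d n = {F \<in> Lbox d (replicate d 0) n. \<exists>i<d. \<not> snd (F!i) \<and> (fst (F!i) = int n \<or> fst (F!i) = - int n)}"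

lemma new_cells_bd:
  "elem_cubes d k (Xt d \<omega> t \<inter> Lambda d n) - elem_cubes d k (XL (Lbox d (replicate d 0) n) \<omega> t) \<subseteq> Bd d n"
proof
  fix F assume F: "F \<in> elem_cubes d k (Xt d \<omega> t \<inter> Lambda d n) - elem_cubes d k (XL (Lbox d (replicate d 0) n) \<omega> t)"
  have lF: "length F = d" and dF: "cube_dim F = k" and sF: "cube_set F \<subseteq> Xt d \<omega> t \<inter> Lambda d n"
    using F by (auto simp: elem_cubes_def cubesK_def)
  have FL: "F \<in> Lbox d (replicate d 0) n" using sF lF unfolding Lbox_def Lambda_def cubesK_def by auto
  then have Fb: "\<And>i. i < d \<Longrightarrow> - int n \<le> fst (F!i) \<and> hi F i \<le> int n" by (auto simp: Lbox_iff)
  show "F \<in> Bd d n"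
  proof (rule ccontr)
    assume nB: "F \<notin> Bd d n"
    then have nb: "\<And>i. i < d \<Longrightarrow> snd (F!i) \<or> (fst (F!i) \<noteq> int n \<and> fst (F!i) \<noteq> - int n)"
      using FL unfolding Bd_def by auto
    define c where "c j = (if j < d then real_of_int (fst (F!j)) + (if snd (F!j) then 1/2 else 0) else 0)" for j
    have "c \<in> cube_set F" using lF by (auto simp: cube_set_def c_def)
    then have "c \<in> Xt d \<omega> t" using sF by blast
    then obtain Q where Q: "Q \<in> cubesK d" "\<omega> Q \<le> t" "c \<in> cube_set Q" unfolding Xt_def by blast
    have lQ: "length Q = d" using Q(1) by (simp add: cubesK_def)
    have cQ: "\<And>i. i < d \<Longrightarrow> real_of_int (fst (Q!i)) \<le> c i \<and> c i \<le> real_of_int (fst (Q!i)) + (if snd (Q!i) then 1 else 0)"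
      using Q(3) lQ by (auto simp: cube_set_def)
    have co: "\<And>i. i < d \<Longrightarrow> (-int n \<le> fst (Q!i) \<and> hi Q i \<le> int n) \<and>
       (\<forall>p. real_of_int (fst (F!i)) \<le> p \<and> p \<le> real_of_int (fst (F!i)) + (if snd (F!i) then 1 else 0) \<longrightarrow>
           real_of_int (fst (Q!i)) \<le> p \<and> p \<le> real_of_int (fst (Q!i)) + (if snd (Q!i) then 1 else 0))"
    proof -
      fix i assume i: "i < d"
      have cdef: "c i = real_of_int (fst (F!i)) + (if snd (F!i) then 1/2 else 0)" using i by (simp add: c_def)
      show "?thesis i"
        using coord_lemma[OF cQ[OF i, THEN conjunct1] cQ[OF i, THEN conjunct2] cdef, of "int n"] Fb[OF i] nb[OF i]
        by auto
    qed
    have QL: "Q \<in> Lbox d (replicate d 0) n" using co lQ by (simp add: Lbox_iff)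
    have "cube_set F \<subseteq> cube_set Q"
    proof
      fix p assume p: "p \<in> cube_set F"
      show "p \<in> cube_set Q" using p co lF lQ by (auto simp: cube_set_def)
    qed
    then have "cube_set F \<subseteq> XL (Lbox d (replicate d 0) n) \<omega> t"
      using QL Q(2) unfolding XL_def by blast
    then have "F \<in> elem_cubes d k (XL (Lbox d (replicate d 0) n) \<omega> t)"
      using lF dF by (simp add: elem_cubes_def cubesK_def)
    then show False using F by blast
  qed
qed

lemma A_sub_Y: "XL (Lbox d (replicate d 0) n) \<omega> t \<subseteq> Xt d \<omega> t \<inter> Lambda d n"
  unfolding XL_def Xt_def Lambda_def Lbox_def by blast



lemma card_fixed_coord:
  assumes A: "finite A" and i: "i < d"
  shows "card {F. length F = d \<and> set F \<subseteq> A \<and> F!i = a} \<le> card A ^ (d - 1)"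
proof -
  define f where "f F = take i F @ drop (Suc i) F" for F :: "'a list"
  have inj: "inj_on f {F. length F = d \<and> set F \<subseteq> A \<and> F!i = a}"
  proof
    fix F F' assume F: "F \<in> {F. length F = d \<and> set F \<subseteq> A \<and> F!i = a}"
      and F': "F' \<in> {F. length F = d \<and> set F \<subseteq> A \<and> F!i = a}" and e: "f F = f F'"
    have ll: "length (take i F) = length (take i F')" using F F' by simp
    have e2: "take i F @ drop (Suc i) F = take i F' @ drop (Suc i) F'" using e unfolding f_def .
    have t: "take i F = take i F'" and dr: "drop (Suc i) F = drop (Suc i) F'"
      using append_eq_append_conv[of "take i F" "take i F'" "drop (Suc i) F" "drop (Suc i) F'"] ll e2 by auto
    have "F = take i F @ F!i # drop (Suc i) F" using F i by (intro id_take_nth_drop) simp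
    also have "\<dots> = take i F' @ F'!i # drop (Suc i) F'" using t dr F F' by simp
    also have "\<dots> = F'" using F' i by (intro id_take_nth_drop[symmetric]) simp
    finally show "F = F'" .
  qed
  have sub: "f ` {F. length F = d \<and> set F \<subseteq> A \<and> F!i = a} \<subseteq> {xs. set xs \<subseteq> A \<and> length xs = d - 1}"
  proof
    fix G assume "G \<in> f ` {F. length F = d \<and> set F \<subseteq> A \<and> F!i = a}"
    then obtain F where F: "length F = d" "set F \<subseteq> A" "G = f F" by auto
    have "set G \<subseteq> set F" unfolding F(3) f_def using set_take_subset set_drop_subset by fastforce
    moreover have "length G = d - 1" using F i by (simp add: f_def)
    ultimately show "G \<in> {xs. set xs \<subseteq> A \<and> length xs = d - 1}" using F(2) by auto
  qed
  have "card {F. length F = d \<and> set F \<subseteq> A \<and> F!i = a} = card (f ` {F. length F = d \<and> set F \<subseteq> A \<and> F!i = a})"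
    using card_image[OF inj] by simp
  also have "\<dots> \<le> card {xs. set xs \<subseteq> A \<and> length xs = d - 1}"
    by (intro card_mono sub finite_lists_length_eq A)
  also have "\<dots> = card A ^ (d - 1)" by (rule card_lists_length_eq[OF A])
  finally show ?thesis .
qed

lemma card_Bd: "card (Bd d n) \<le> 2 * d * (2 * (2 * n + 1)) ^ (d - 1)"
proof -
  define Rg where "Rg = {- int n..int n} \<times> (UNIV :: bool set)"
  have fR: "finite Rg" by (simp add: Rg_def)
  have cR: "card Rg = 2 * (2 * n + 1)"
  proof -
    have "card {- int n..int n} = 2 * n + 1" by simp
    then show ?thesis by (simp add: Rg_def card_cartesian_product)
  qed
  define T where "T i s = {F. length F = d \<and> set F \<subseteq> Rg \<and> F!i = (s, False)}" for i s
  have sub: "Bd d n \<subseteq> (\<Union>i\<in>{..<d}. \<Union>s\<in>{int n, - int n}. T i s)"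
  proof
    fix F assume F: "F \<in> Bd d n"
    then have FL: "F \<in> Lbox d (replicate d 0) n" and ex: "\<exists>i<d. \<not> snd (F!i) \<and> (fst (F!i) = int n \<or> fst (F!i) = - int n)"
      unfolding Bd_def by auto
    have lF: "length F = d" using FL by (simp add: Lbox_iff)
    have "set F \<subseteq> Rg"
    proof
      fix z assume "z \<in> set F"
      then obtain j where j: "j < d" "z = F!j" using lF by (auto simp: in_set_conv_nth)
      have "- int n \<le> fst (F!j) \<and> hi F j \<le> int n" using FL j by (simp add: Lbox_iff)
      then have "- int n \<le> fst (F!j) \<and> fst (F!j) \<le> int n" by (cases "snd (F!j)") auto
      then show "z \<in> Rg" using j by (auto simp: Rg_def mem_Times_iff)
    qed
    moreover obtain i where i: "i < d" "\<not> snd (F!i)" "fst (F!i) = int n \<or> fst (F!i) = - int n" using ex by blast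
    moreover have "F!i = (fst (F!i), False)" using i(2) by (metis prod.collapse)
    ultimately show "F \<in> (\<Union>i\<in>{..<d}. \<Union>s\<in>{int n, - int n}. T i s)" using lF
      unfolding T_def by (intro UN_I[of i]) auto
  qed
  have fT: "finite (T i s)" for i s
    unfolding T_def by (rule finite_subset[OF _ finite_lists_length_eq[OF fR, of d]]) auto
  have "card (Bd d n) \<le> card (\<Union>i\<in>{..<d}. \<Union>s\<in>{int n, - int n}. T i s)"
    by (intro card_mono sub) (simp add: fT)
  also have "\<dots> \<le> (\<Sum>i\<in>{..<d}. card (\<Union>s\<in>{int n, - int n}. T i s))" by (rule card_UN_le) simp
  also have "\<dots> \<le> (\<Sum>i\<in>{..<d}. \<Sum>s\<in>{int n, - int n}. card (T i s))"
    by (intro sum_mono card_UN_le) simp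
  also have "\<dots> \<le> (\<Sum>i\<in>{..<d}. \<Sum>s\<in>{int n, - int n}. card Rg ^ (d - 1))"
    unfolding T_def by (intro sum_mono card_fixed_coord fR) auto
  also have "\<dots> \<le> (\<Sum>i\<in>{..<d}. 2 * card Rg ^ (d - 1))"
    by (intro sum_mono) (simp add: card_insert_le_m1 sum_constant card.insert_remove, (cases "n = 0"; simp))
  also have "\<dots> = 2 * d * (2 * (2 * n + 1)) ^ (d - 1)" by (simp add: cR)
  finally show ?thesis .
qed

definition gp :: "nat \<Rightarrow> nat list \<Rightarrow> int list" where
  "gp K js = map (\<lambda>j. int (2 * K + 1) * int j) js"

lemma grid_in:
  assumes "length js = d" "\<forall>j\<in>set js. j < M"
  shows "Lbox d (gp K js) K \<subseteq> Lbox d (replicate d 0) ((2 * K + 1) * M)"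
proof
  fix Q assume Q: "Q \<in> Lbox d (gp K js) K"
  have lQ: "length Q = d" using Q by (simp add: Lbox_iff)
  have "- int ((2 * K + 1) * M) \<le> fst (Q!i) \<and> hi Q i \<le> int ((2 * K + 1) * M)" if i: "i < d" for i
  proof -
    have j: "js!i < M" using assms i by (metis nth_mem)
    have q: "gp K js ! i - int K \<le> fst (Q!i)" "hi Q i \<le> gp K js ! i + int K" using Q i by (auto simp: Lbox_iff)
    have g: "gp K js ! i = int (2 * K + 1) * int (js!i)" using i assms(1) by (simp add: gp_def)
    have "(2 * K + 1) * (js!i) + K \<le> (2 * K + 1) * M"
    proof -
      have "(2 * K + 1) * Suc (js!i) \<le> (2 * K + 1) * M" using j by (intro mult_le_mono2) simp
      then show ?thesis by simp
    qed
    then have "int ((2 * K + 1) * (js!i) + K) \<le> int ((2 * K + 1) * M)" by (simp only: of_nat_le_iff)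
    then have "int (2 * K + 1) * int (js!i) + int K \<le> int ((2 * K + 1) * M)" by (simp only: of_nat_add of_nat_mult)
    moreover have "0 \<le> int (2 * K + 1) * int (js!i)" by simp
    moreover have "int K \<le> int ((2 * K + 1) * M)"
    proof -
      have "K \<le> (2 * K + 1) * M" using j by (cases M) auto
      then show ?thesis by (simp only: of_nat_le_iff)
    qed
    ultimately show ?thesis using q g by linarith
  qed
  then show "Q \<in> Lbox d (replicate d 0) ((2 * K + 1) * M)" using lQ by (simp add: Lbox_iff)
qed

lemma grid_disj:
  assumes "length js = d" "length js' = d" "js \<noteq> js'"
  shows "Lbox d (gp K js) K \<inter> Lbox d (gp K js') K = {}"
proof (rule ccontr)
  assume "Lbox d (gp K js) K \<inter> Lbox d (gp K js') K \<noteq> {}"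
  then obtain Q where Q: "Q \<in> Lbox d (gp K js) K" "Q \<in> Lbox d (gp K js') K" by blast
  have "\<exists>i<d. js!i \<noteq> js'!i"
  proof (rule ccontr)
    assume "\<not> (\<exists>i<d. js!i \<noteq> js'!i)"
    then have "js = js'" using assms(1,2) by (intro nth_equalityI) auto
    then show False using assms(3) by simp
  qed
  then obtain i where i: "i < d" "js!i \<noteq> js'!i" by blast
  have q: "gp K js ! i - int K \<le> fst (Q!i)" "fst (Q!i) \<le> gp K js ! i + int K"
          "gp K js' ! i - int K \<le> fst (Q!i)" "fst (Q!i) \<le> gp K js' ! i + int K"
    using Q i by (auto simp: Lbox_iff split: if_splits)
  have g: "gp K js ! i = int (2 * K + 1) * int (js!i)" "gp K js' ! i = int (2 * K + 1) * int (js'!i)"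
    using i assms by (simp_all add: gp_def)
  have "\<bar>int (2 * K + 1) * int (js!i) - int (2 * K + 1) * int (js'!i)\<bar> \<le> 2 * int K" using q g by linarith
  moreover have "\<bar>int (2 * K + 1) * int (js!i) - int (2 * K + 1) * int (js'!i)\<bar> = int (2 * K + 1) * \<bar>int (js!i) - int (js'!i)\<bar>"
    by (simp add: abs_mult right_diff_distrib[symmetric])
  moreover have "1 \<le> \<bar>int (js!i) - int (js'!i)\<bar>" using i(2) by linarith
  moreover have "int (2 * K + 1) * 1 \<le> int (2 * K + 1) * \<bar>int (js!i) - int (js'!i)\<bar>"
    using \<open>1 \<le> \<bar>int (js!i) - int (js'!i)\<bar>\<close> by (intro mult_left_mono) simp_all
  ultimately have "int (2 * K + 1) * 1 \<le> 2 * int K" by linarith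
  then show False by simp
qed

definition good :: "nat \<Rightarrow> nat \<Rightarrow> nat \<Rightarrow> (cube \<Rightarrow> real) \<Rightarrow> real \<Rightarrow> int list \<Rightarrow> bool" where
  "good d q K \<omega> t x \<longleftrightarrow> (\<forall>L. finite L \<and> L \<subseteq> cubesK d \<and> Lbox d x K \<subseteq> L \<longrightarrow>
     1 + betti d q (XL (L - Lbox d x K) \<omega> t) \<le> betti d q (XL L \<omega> t))"

lemma iterate:
  assumes "finite G"
  shows "(\<forall>x\<in>G. good d q K \<omega> t x) \<Longrightarrow> (\<forall>x\<in>G. Lbox d x K \<subseteq> L) \<Longrightarrow>
    (\<forall>x\<in>G. \<forall>y\<in>G. x \<noteq> y \<longrightarrow> Lbox d x K \<inter> Lbox d y K = {}) \<Longrightarrow> finite L \<Longrightarrow> L \<subseteq> cubesK d \<Longrightarrow>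
    card G \<le> betti d q (XL L \<omega> t)"
  using assms
proof (induction G arbitrary: L rule: finite_induct)
  case empty then show ?case by simp
next
  case (insert x G)
  define L1 where "L1 = L - Lbox d x K"
  have h1: "\<forall>y\<in>G. Lbox d y K \<subseteq> L1"
  proof
    fix y assume y: "y \<in> G"
    then have "y \<noteq> x" using insert.hyps(2) by blast
    then have "Lbox d x K \<inter> Lbox d y K = {}" using insert.prems(3) y by blast
    moreover have "Lbox d y K \<subseteq> L" using insert.prems(2) y by blast
    ultimately show "Lbox d y K \<subseteq> L1" unfolding L1_def by blast
  qed
  have h0: "\<forall>y\<in>G. good d q K \<omega> t y" using insert.prems(1) by blast
  have h2: "\<forall>y\<in>G. \<forall>z\<in>G. y \<noteq> z \<longrightarrow> Lbox d y K \<inter> Lbox d z K = {}" using insert.prems(3) by blast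
  have h3: "finite L1" "L1 \<subseteq> cubesK d" using insert.prems(4,5) unfolding L1_def by auto
  have IH: "card G \<le> betti d q (XL L1 \<omega> t)" by (rule insert.IH[OF h0 h1 h2 h3])
  have gx: "good d q K \<omega> t x" using insert.prems(1) by blast
  have "Lbox d x K \<subseteq> L" using insert.prems(2) by blast
  then have "1 + betti d q (XL L1 \<omega> t) \<le> betti d q (XL L \<omega> t)"
    using gx insert.prems(4,5) unfolding good_def L1_def by blast
  then show ?case using IH insert.hyps by simp
qed



lemma shift_cubesK: "length y = d \<Longrightarrow> Q \<in> cubesK d \<Longrightarrow> shift_cube y Q \<in> cubesK d"
  by (simp add: cubesK_def)

lemma inj_shift: "length y = d \<Longrightarrow> inj_on (shift_cube y) (cubesK d)"
proof
  fix R R' assume "length y = d" "R \<in> cubesK d" "R' \<in> cubesK d" "shift_cube y R = shift_cube y R'"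
  then show "R = R'" using shift_inv[of R y] shift_inv[of R' y] by (metis cubesK_def mem_Collect_eq)
qed

lemma XL_shift_tau:
  assumes y: "length y = d" and M: "M \<subseteq> cubesK d"
  shows "XL (shift_cube y ` M) (tau d y \<omega>) t = tr y ` XL M \<omega> t"
proof -
  have val: "tau d y \<omega> (shift_cube y R) = \<omega> R" if "R \<in> M" for R
  proof -
    have "R \<in> cubesK d" using M that by blast
    then show ?thesis using shift_cubesK[OF y] shift_inv[of R y] y by (simp add: tau_def cubesK_def)
  qed
  have cs: "cube_set (shift_cube y R) = tr y ` cube_set R" if "R \<in> M" for R
    using M that y by (intro cube_set_shift) (auto simp: cubesK_def)
  show ?thesis
  proof
    show "XL (shift_cube y ` M) (tau d y \<omega>) t \<subseteq> tr y ` XL M \<omega> t"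
    proof
      fix p assume "p \<in> XL (shift_cube y ` M) (tau d y \<omega>) t"
      then obtain R where R: "R \<in> M" "tau d y \<omega> (shift_cube y R) \<le> t" "p \<in> cube_set (shift_cube y R)"
        unfolding XL_def by blast
      then obtain p0 where "p0 \<in> cube_set R" "p = tr y p0" using cs by blast
      moreover have "cube_set R \<subseteq> XL M \<omega> t" using R val unfolding XL_def by auto
      ultimately show "p \<in> tr y ` XL M \<omega> t" by blast
    qed
    show "tr y ` XL M \<omega> t \<subseteq> XL (shift_cube y ` M) (tau d y \<omega>) t"
    proof
      fix p assume "p \<in> tr y ` XL M \<omega> t"
      then obtain p0 R where R: "R \<in> M" "\<omega> R \<le> t" "p0 \<in> cube_set R" "p = tr y p0"
        unfolding XL_def by blast
      then have "p \<in> cube_set (shift_cube y R)" using cs by blast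
      moreover have "tau d y \<omega> (shift_cube y R) \<le> t" using val R by simp
      ultimately show "p \<in> XL (shift_cube y ` M) (tau d y \<omega>) t" using R(1) unfolding XL_def by blast
    qed
  qed
qed

lemma shift_Lbox:
  assumes x: "length x = d"
  shows "shift_cube (map uminus x) ` Lbox d x K = Lbox d (replicate d 0) K"
proof
  show "shift_cube (map uminus x) ` Lbox d x K \<subseteq> Lbox d (replicate d 0) K"
  proof
    fix Q' assume "Q' \<in> shift_cube (map uminus x) ` Lbox d x K"
    then obtain Q where Q: "Q \<in> Lbox d x K" "Q' = shift_cube (map uminus x) Q" by blast
    have lQ: "length Q = d" using Q by (simp add: Lbox_iff)
    show "Q' \<in> Lbox d (replicate d 0) K"
      using Q lQ x by (auto simp: Lbox_iff shift_nth)
  qed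
  show "Lbox d (replicate d 0) K \<subseteq> shift_cube (map uminus x) ` Lbox d x K"
  proof
    fix Q assume Q: "Q \<in> Lbox d (replicate d 0) K"
    have lQ: "length Q = d" using Q by (simp add: Lbox_iff)
    have "shift_cube x Q \<in> Lbox d x K" using Q lQ x by (auto simp: Lbox_iff shift_nth)
    moreover have "Q = shift_cube (map uminus x) (shift_cube x Q)" using shift_inv[of Q x] lQ x by simp
    ultimately show "Q \<in> shift_cube (map uminus x) ` Lbox d x K" by blast
  qed
qed

lemma good_tau:
  assumes x: "length x = d" and om: "tau d (map uminus x) \<omega> \<in> Omega_q d q (replicate d 0) K t"
  shows "good d q K \<omega> t x"
  unfolding good_def
proof (intro allI impI)
  fix L assume L: "finite L \<and> L \<subseteq> cubesK d \<and> Lbox d x K \<subseteq> L"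
  define y where "y = map uminus x"
  have y: "length y = d" using x by (simp add: y_def)
  define L' where "L' = shift_cube y ` L"
  have LB: "Lbox d x K \<subseteq> cubesK d" by (auto simp: Lbox_def)
  have sL: "shift_cube y ` Lbox d x K = Lbox d (replicate d 0) K" unfolding y_def by (rule shift_Lbox[OF x])
  have L'1: "finite L'" "L' \<subseteq> cubesK d" using L shift_cubesK[OF y] by (auto simp: L'_def)
  have L'2: "Lbox d (replicate d 0) K \<subseteq> L'" using L sL unfolding L'_def by blast
  have "1 + betti d q (XL (L' - Lbox d (replicate d 0) K) (tau d y \<omega>) t) \<le> betti d q (XL L' (tau d y \<omega>) t)"
    using om L'1 L'2 unfolding Omega_q_def y_def by blast
  moreover have "L' - Lbox d (replicate d 0) K = shift_cube y ` (L - Lbox d x K)"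
    unfolding L'_def sL[symmetric] using L LB by (intro inj_on_image_set_diff[OF inj_shift[OF y], symmetric]) auto
  moreover have "XL (shift_cube y ` (L - Lbox d x K)) (tau d y \<omega>) t = tr y ` XL (L - Lbox d x K) \<omega> t"
    using L by (intro XL_shift_tau[OF y]) auto
  moreover have "XL L' (tau d y \<omega>) t = tr y ` XL L \<omega> t"
    unfolding L'_def using L by (intro XL_shift_tau[OF y]) auto
  ultimately show "1 + betti d q (XL (L - Lbox d x K) \<omega> t) \<le> betti d q (XL L \<omega> t)"
    using betti_tr[OF y] by simp
qed



definition JM :: "nat \<Rightarrow> nat \<Rightarrow> nat list set" where
  "JM d M = {js. set js \<subseteq> {..<M} \<and> length js = d}"

lemma JM_finite: "finite (JM d M)"
  unfolding JM_def by (rule finite_lists_length_eq) simp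

lemma JM_card: "card (JM d M) = M ^ d"
  unfolding JM_def by (subst card_lists_length_eq) simp_all

lemma gp_inj: "inj (gp K)"
proof
  fix js js' assume "gp K js = gp K js'"
  then have "map (\<lambda>j. int (2 * K + 1) * int j) js = map (\<lambda>j. int (2 * K + 1) * int j) js'"
    by (simp add: gp_def)
  moreover have "inj (\<lambda>j. int (2 * K + 1) * int j)" by (rule injI) simp
  ultimately show "js = js'" by (simp add: inj_map_eq_map)
qed

lemma det_bound:
  "card {js \<in> JM d M. good d q K \<omega> t (gp K js)}
    \<le> betti d q (Xt d \<omega> t \<inter> Lambda d ((2 * K + 1) * M)) + 2 * d * (2 * (2 * ((2 * K + 1) * M) + 1)) ^ (d - 1)"
proof -
  define n where "n = (2 * K + 1) * M"
  define Gj where "Gj = {js \<in> JM d M. good d q K \<omega> t (gp K js)}"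
  define G where "G = gp K ` Gj"
  define L where "L = Lbox d (replicate d 0) n"
  define Y where "Y = Xt d \<omega> t \<inter> Lambda d n"
  define A where "A = XL L \<omega> t"
  have fGj: "finite Gj" using JM_finite by (simp add: Gj_def)
  have cG: "card G = card Gj" unfolding G_def by (intro card_image inj_on_subset[OF gp_inj]) simp
  have "card G \<le> betti d q A"
    unfolding A_def
  proof (rule iterate)
    show "finite G" using fGj by (simp add: G_def)
    show "\<forall>x\<in>G. good d q K \<omega> t x" by (auto simp: G_def Gj_def)
    show "\<forall>x\<in>G. Lbox d x K \<subseteq> L"
      unfolding G_def Gj_def JM_def L_def n_def using grid_in by blast
    show "\<forall>x\<in>G. \<forall>y\<in>G. x \<noteq> y \<longrightarrow> Lbox d x K \<inter> Lbox d y K = {}"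
      unfolding G_def Gj_def JM_def using grid_disj by blast
    show "finite L" unfolding L_def by (rule Lbox_finite)
    show "L \<subseteq> cubesK d" by (auto simp: L_def Lbox_def)
  qed
  moreover have "betti d q A \<le> betti d q Y + card (elem_cubes d (Suc q) Y - elem_cubes d (Suc q) A)"
  proof (rule betti_drop)
    show "A \<subseteq> Y" unfolding A_def Y_def L_def by (rule A_sub_Y)
    show "finite (elem_cubes d q Y)" by (rule elem_cubes_box_finite[of _ d "replicate d 0" n]) (auto simp: Y_def Lambda_def)
    show "finite (elem_cubes d (Suc q) Y)" by (rule elem_cubes_box_finite[of _ d "replicate d 0" n]) (auto simp: Y_def Lambda_def)
  qed
  moreover have "card (elem_cubes d (Suc q) Y - elem_cubes d (Suc q) A) \<le> card (Bd d n)"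
  proof (rule card_mono)
    show "finite (Bd d n)" by (rule finite_subset[OF _ Lbox_finite[of d "replicate d 0" n]]) (auto simp: Bd_def)
    show "elem_cubes d (Suc q) Y - elem_cubes d (Suc q) A \<subseteq> Bd d n"
      unfolding Y_def A_def L_def by (rule new_cells_bd)
  qed
  moreover note card_Bd[of d n]
  ultimately show ?thesis using cG unfolding Gj_def Y_def n_def by linarith
qed



lemma final_arith:
  fixes beta :: "nat \<Rightarrow> nat" and b p :: real and K d :: nat
  assumes conv: "(\<lambda>M. real (beta ((2 * K + 1) * M)) / (2 * real ((2 * K + 1) * M)) ^ d) \<longlonglongrightarrow> b"
    and freq: "\<And>N. \<exists>M>N. p * real M ^ d / 2 \<le> real (beta ((2 * K + 1) * M)) + real (2 * d * (2 * (2 * ((2 * K + 1) * M) + 1)) ^ (d - 1))"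
    and p: "p > 0" and d: "d \<ge> 1"
  shows "b > 0"
proof (rule ccontr)
  assume "\<not> b > 0"
  then have b0: "b \<le> 0" by simp
  define c where "c = p / (2 * real (4 * K + 2) ^ d)"
  have c0: "c > 0" using p by (simp add: c_def)
  define D where "D = real (2 * d * 3 ^ (d - 1))"
  have ev1: "eventually (\<lambda>M. real (beta ((2 * K + 1) * M)) / (2 * real ((2 * K + 1) * M)) ^ d < c / 2) sequentially"
    using order_tendstoD(2)[OF conv, of "c / 2"] b0 c0 by linarith
  have ev2: "eventually (\<lambda>M. 2 * D / c < real M) sequentially"
    by (rule eventually_sequentiallyI[of "nat \<lceil>2 * D / c\<rceil> + 1"]) linarith
  obtain N where N: "\<And>M. M \<ge> N \<Longrightarrow> real (beta ((2 * K + 1) * M)) / (2 * real ((2 * K + 1) * M)) ^ d < c / 2 \<and> 2 * D / c < real M"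
    using eventually_conj[OF ev1 ev2] unfolding eventually_sequentially by blast
  obtain M where M: "M > N" "p * real M ^ d / 2 \<le> real (beta ((2 * K + 1) * M)) + real (2 * d * (2 * (2 * ((2 * K + 1) * M) + 1)) ^ (d - 1))"
    using freq by blast
  have M1: "M \<ge> 1" using M(1) by simp
  define n where "n = (2 * K + 1) * M"
  have n1: "n \<ge> 1" using M1 by (simp add: n_def)
  define X where "X = 2 * real n"
  have X0: "X > 0" using n1 by (simp add: X_def)
  have XM: "X = real (4 * K + 2) * real M" by (simp add: X_def n_def algebra_simps)
  have Xd: "X ^ d = X * X ^ (d - 1)" using d by (metis Suc_diff_le diff_Suc_1 power_Suc)
  have Cb: "real (2 * d * (2 * (2 * n + 1)) ^ (d - 1)) \<le> D * X ^ (d - 1)"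
  proof -
    have "2 * (2 * n + 1) \<le> 3 * (2 * n)" using n1 by simp
    then have "(2 * (2 * n + 1)) ^ (d - 1) \<le> (3 * (2 * n)) ^ (d - 1)" by (rule power_mono) simp
    then have "2 * d * (2 * (2 * n + 1)) ^ (d - 1) \<le> 2 * d * (3 * (2 * n)) ^ (d - 1)" by simp
    then have "real (2 * d * (2 * (2 * n + 1)) ^ (d - 1)) \<le> real (2 * d * (3 * (2 * n)) ^ (d - 1))"
      by (simp only: of_nat_le_iff)
    also have "\<dots> = real (2 * d * 3 ^ (d - 1)) * real ((2 * n) ^ (d - 1))"
      by (simp only: power_mult_distrib of_nat_mult mult.assoc)
    also have "\<dots> = D * X ^ (d - 1)" by (simp add: D_def X_def)
    finally show ?thesis .
  qed
  have r1: "real (beta n) / X ^ d < c / 2" using N[of M] M(1) by (simp add: n_def X_def)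
  have DM: "2 * D / c < real M" using N[of M] M(1) by simp
  have "D / X \<le> D / real M"
  proof -
    have "real M \<le> X" using XM M1 by (simp add: algebra_simps)
    moreover have "D \<ge> 0" by (simp add: D_def)
    ultimately show ?thesis using M1 by (intro divide_left_mono) auto
  qed
  also have "D / real M < c / 2" using DM c0 M1 by (simp add: field_simps)
  finally have DX: "D / X < c / 2" .
  have gen: "\<And>A B :: real. B > 0 \<Longrightarrow> A > 0 \<Longrightarrow> p * B / 2 / (A * B) = p / (2 * A)"
    by (simp add: field_simps)
  have Xp: "X ^ d = real (4 * K + 2) ^ d * real M ^ d" unfolding XM by (rule power_mult_distrib)
  have "p * real M ^ d / 2 / X ^ d = c"
    unfolding Xp c_def by (rule gen) (use M1 in simp_all)
  moreover have "p * real M ^ d / 2 / X ^ d \<le> real (beta n) / X ^ d + D * X ^ (d - 1) / X ^ d"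
  proof -
    have "p * real M ^ d / 2 \<le> real (beta n) + D * X ^ (d - 1)" using M(2) Cb by (simp add: n_def)
    then have "p * real M ^ d / 2 / X ^ d \<le> (real (beta n) + D * X ^ (d - 1)) / X ^ d"
      using X0 by (intro divide_right_mono) simp_all
    then show ?thesis by (simp only: add_divide_distrib)
  qed
  moreover have "D * X ^ (d - 1) / X ^ d = D / X" using X0 Xd by simp
  ultimately have "c \<le> real (beta n) / X ^ d + D / X" by simp
  then show False using r1 DX by linarith
qed



theorem proposition3p5:
  fixes d q K :: nat and P :: "(cube \<Rightarrow> real) measure" and t beta_hat :: real
  assumes "prob_space P"
    and "sets P = sets (OmegaM d)"
    and stationary: "\<forall>x. length x = d \<longrightarrow> distr P P (tau d x) = P"
    and ergodic: "\<forall>A\<in>sets P. (\<forall>x. length x = d \<longrightarrow> tau d x -` A \<inter> space P = A)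
                       \<longrightarrow> measure P A = 0 \<or> measure P A = 1"
    and "q < d"
    and "0 \<le> t" and "t \<le> 1"
    and limit: "AE \<omega> in P. (\<lambda>n. real (betti d q (Xt d \<omega> t \<inter> Lambda d n)) / (2 * real n) ^ d)
                    \<longlonglongrightarrow> beta_hat"
    and "0 < K"
    and "measure P (Omega_q d q (replicate d 0) K t) > 0"
  shows "beta_hat > 0"
proof -
  interpret prob_space P by fact
  define Om where "Om = Omega_q d q (replicate d 0) K t"
  define p where "p = measure P Om"
  have p0: "p > 0" using assms(10) by (simp add: p_def Om_def)
  have Om_sets: "Om \<in> sets P"
  proof (rule ccontr)
    assume "Om \<notin> sets P"
    then have "p = 0" unfolding p_def by (rule measure_notin_sets)
    then show False using p0 by simp
  qed
  have tau_meas: "tau d y \<in> measurable P P" if y: "length y = d" for y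
  proof -
    have "tau d y \<in> measurable (OmegaM d) (OmegaM d)"
      unfolding OmegaM_def tau_def
      by (intro measurable_restrict measurable_component_singleton) (simp add: cubesK_def y)
    then show ?thesis using measurable_cong_sets[OF assms(2) assms(2)] by simp
  qed
  define E where "E x = tau d (map uminus x) -` Om \<inter> space P" for x
  have E_sets: "E x \<in> sets P" if "length x = d" for x
    unfolding E_def using tau_meas[of "map uminus x"] that Om_sets by (intro measurable_sets) auto
  have E_meas: "measure P (E x) = p" if x: "length x = d" for x
  proof -
    have ly: "length (map uminus x) = d" using x by simp
    have "measure (distr P P (tau d (map uminus x))) Om = measure P (E x)"
      unfolding E_def by (rule measure_distr[OF tau_meas[OF ly] Om_sets])
    then show ?thesis using stationary ly by (simp add: p_def)
  qed
  have E_good: "good d q K \<omega> t x" if "length x = d" "\<omega> \<in> E x" for x \<omega>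
    using that good_tau[of x d \<omega> q K t] unfolding E_def Om_def by blast
  have gpl: "length (gp K js) = length js" for js by (simp add: gp_def)
  have gpE: "E (gp K js) \<in> sets P" if "js \<in> JM d M" for js M
    using that E_sets gpl by (simp add: JM_def)
  define Nf where "Nf M \<omega> = (\<Sum>js\<in>JM d M. indicator (E (gp K js)) \<omega> :: real)" for M \<omega>
  have Nf_le: "Nf M \<omega> \<le> real (card {js \<in> JM d M. good d q K \<omega> t (gp K js)})" for M \<omega>
  proof -
    have "Nf M \<omega> \<le> (\<Sum>js\<in>JM d M. if good d q K \<omega> t (gp K js) then 1 else 0)"
      unfolding Nf_def
    proof (intro sum_mono)
      fix js assume js: "js \<in> JM d M"
      show "indicator (E (gp K js)) \<omega> \<le> (if good d q K \<omega> t (gp K js) then 1 else (0::real))"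
        using E_good[of "gp K js" \<omega>] js gpl by (auto simp: indicator_def JM_def)
    qed
    also have "\<dots> = real (card {js \<in> JM d M. good d q K \<omega> t (gp K js)})"
      using JM_finite by (simp add: sum.If_cases Int_def)
    finally show ?thesis .
  qed
  have Nf_bound: "Nf M \<omega> \<le> real M ^ d" for M \<omega>
  proof -
    have "Nf M \<omega> \<le> (\<Sum>js\<in>JM d M. 1)" unfolding Nf_def by (intro sum_mono) (simp add: indicator_def)
    also have "\<dots> = real M ^ d" using JM_card by simp
    finally show ?thesis .
  qed
  have Nf_meas: "Nf M \<in> borel_measurable P" for M
    unfolding Nf_def by (intro borel_measurable_sum borel_measurable_indicator gpE)
  have ind_int: "integrable P (indicator (E (gp K js)) :: _ \<Rightarrow> real)" if "js \<in> JM d M" for js M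
    using gpE[OF that] by (simp add: integrable_indicator_iff Int_absorb2 sets.sets_into_space emeasure_finite less_top[symmetric])
  have Nf_intg: "integrable P (Nf M)" for M
    unfolding Nf_def by (rule Bochner_Integration.integrable_sum, rule ind_int)
  have Nf_int: "integral\<^sup>L P (Nf M) = real M ^ d * p" for M
  proof -
    have "integral\<^sup>L P (Nf M) = (\<Sum>js\<in>JM d M. integral\<^sup>L P (indicator (E (gp K js))))"
      unfolding Nf_def by (rule Bochner_Integration.integral_sum, rule ind_int)
    also have "\<dots> = (\<Sum>js\<in>JM d M. p)"
    proof (intro sum.cong refl)
      fix js assume js: "js \<in> JM d M"
      have "E (gp K js) \<subseteq> space P" by (simp add: E_def)
      then have "integral\<^sup>L P (indicator (E (gp K js)) :: _ \<Rightarrow> real) = measure P (E (gp K js))"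
        by (simp add: Int_absorb2)
      also have "\<dots> = p" using js gpl by (intro E_meas) (simp add: JM_def)
      finally show "integral\<^sup>L P (indicator (E (gp K js)) :: _ \<Rightarrow> real) = p" .
    qed
    also have "\<dots> = real M ^ d * p" using JM_card by simp
    finally show ?thesis .
  qed
  define A where "A M = {\<omega> \<in> space P. p * real M ^ d / 2 \<le> Nf M \<omega>}" for M
  have A_sets: "A M \<in> sets P" for M
    unfolding A_def using Nf_meas[of M] unfolding borel_measurable_iff_ge by blast
  have A_prob: "measure P (A M) \<ge> p / 2" if M1: "M \<ge> 1" for M
  proof -
    have intI: "integrable P (indicator (A M) :: _ \<Rightarrow> real)"
      using A_sets[of M] by (simp add: integrable_indicator_iff Int_absorb2 sets.sets_into_space emeasure_finite less_top[symmetric])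
    have Mp: "real M ^ d > 0" using M1 by simp
    have pt: "Nf M \<omega> \<le> real M ^ d * indicator (A M) \<omega> + p * real M ^ d / 2" if "\<omega> \<in> space P" for \<omega>
    proof -
      have "p * real M ^ d / 2 \<ge> 0" using p0 Mp by simp
      then show ?thesis using that Nf_bound[of M \<omega>] by (auto simp: A_def indicator_def)
    qed
    have "integral\<^sup>L P (Nf M) \<le> integral\<^sup>L P (\<lambda>\<omega>. real M ^ d * indicator (A M) \<omega> + p * real M ^ d / 2)"
    proof (rule integral_mono[OF Nf_intg])
      show "integrable P (\<lambda>\<omega>. real M ^ d * indicator (A M) \<omega> + p * real M ^ d / 2)"
        using intI by (intro Bochner_Integration.integrable_add integrable_mult_right) auto
      show "\<And>\<omega>. \<omega> \<in> space P \<Longrightarrow> Nf M \<omega> \<le> real M ^ d * indicator (A M) \<omega> + p * real M ^ d / 2"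
        by (rule pt)
    qed
    also have "\<dots> = real M ^ d * measure P (A M) + p * real M ^ d / 2"
    proof -
      have "integral\<^sup>L P (\<lambda>\<omega>. real M ^ d * indicator (A M) \<omega> + p * real M ^ d / 2)
        = integral\<^sup>L P (\<lambda>\<omega>. real M ^ d * indicator (A M) \<omega>) + integral\<^sup>L P (\<lambda>\<omega>. p * real M ^ d / 2)"
        using intI by (intro Bochner_Integration.integral_add) auto
      also have "integral\<^sup>L P (\<lambda>\<omega>. real M ^ d * indicator (A M) \<omega>) = real M ^ d * integral\<^sup>L P (indicator (A M))"
        by (rule integral_mult_right_zero)
      also have "integral\<^sup>L P (indicator (A M) :: _ \<Rightarrow> real) = measure P (A M)"
        using A_sets[of M] by (simp add: Int_absorb2 sets.sets_into_space)
      also have "integral\<^sup>L P (\<lambda>\<omega>. p * real M ^ d / 2) = p * real M ^ d / 2"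
        by (simp add: prob_space)
      finally show ?thesis .
    qed
    finally have "real M ^ d * p \<le> real M ^ d * measure P (A M) + p * real M ^ d / 2"
      unfolding Nf_int .
    then have "real M ^ d * (p / 2) \<le> real M ^ d * measure P (A M)" by (simp add: algebra_simps)
    then show ?thesis using Mp by simp
  qed
  define U where "U N = (\<Union>M\<in>{Suc N..}. A M)" for N
  have U_sets: "U N \<in> sets P" for N unfolding U_def
    by (rule sets.countable_UN) (use A_sets in blast)
  have U_dec: "decseq U" unfolding decseq_def
  proof (intro allI impI subsetI)
    fix m n x assume mn: "m \<le> n" and x: "x \<in> U n"
    then obtain M where M: "M \<ge> Suc n" "x \<in> A M" unfolding U_def by auto
    have "M \<in> {Suc m..}" using M(1) mn by simp
    then show "x \<in> U m" unfolding U_def using M(2) by blast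
  qed
  have U_prob: "measure P (U N) \<ge> p / 2" for N
  proof -
    have "p / 2 \<le> measure P (A (Suc N))" by (rule A_prob) simp
    also have "\<dots> \<le> measure P (U N)"
    proof (rule finite_measure_mono)
      show "A (Suc N) \<subseteq> U N" unfolding U_def by (intro subsetI UN_I[of "Suc N"]) auto
      show "U N \<in> sets P" by (rule U_sets)
    qed
    finally show ?thesis .
  qed
  have "(\<lambda>N. measure P (U N)) \<longlonglongrightarrow> measure P (\<Inter>N. U N)"
    using U_dec by (intro finite_Lim_measure_decseq) (use U_sets in blast)+
  then have UI: "measure P (\<Inter>N. U N) \<ge> p / 2"
    using U_prob by (intro LIMSEQ_le_const) blast+
  obtain \<omega> where \<omega>: "\<omega> \<in> (\<Inter>N. U N)"
    and conv: "(\<lambda>n. real (betti d q (Xt d \<omega> t \<inter> Lambda d n)) / (2 * real n) ^ d) \<longlonglongrightarrow> beta_hat"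
  proof -
    have "\<exists>\<omega>\<in>(\<Inter>N. U N). (\<lambda>n. real (betti d q (Xt d \<omega> t \<inter> Lambda d n)) / (2 * real n) ^ d) \<longlonglongrightarrow> beta_hat"
    proof (rule ccontr)
      assume nc: "\<not> ?thesis"
      have "AE \<omega> in P. \<omega> \<notin> (\<Inter>N. U N)"
        using limit by eventually_elim (use nc in blast)
      moreover have "(\<Inter>N. U N) \<in> sets P" by (rule sets.countable_INT) (use U_sets in blast)+
      moreover have "{x \<in> space P. \<not> x \<notin> (\<Inter>N. U N)} = (\<Inter>N. U N)"
        using sets.sets_into_space[OF U_sets[of 0]] by blast
      ultimately have "emeasure P (\<Inter>N. U N) = 0" using AE_iff_measurable[of "\<Inter>N. U N" P "\<lambda>x. x \<notin> (\<Inter>N. U N)"] by simp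
      then have "measure P (\<Inter>N. U N) = 0" by (simp add: measure_def)
      then show False using UI p0 by simp
    qed
    then show ?thesis using that by blast
  qed
  have freq: "\<exists>M>N. p * real M ^ d / 2 \<le> real (betti d q (Xt d \<omega> t \<inter> Lambda d ((2 * K + 1) * M)))
      + real (2 * d * (2 * (2 * ((2 * K + 1) * M) + 1)) ^ (d - 1))" for N
  proof -
    have "\<omega> \<in> U N" using \<omega> by blast
    then obtain M where M: "M \<ge> Suc N" "\<omega> \<in> A M" unfolding U_def by auto
    have "p * real M ^ d / 2 \<le> Nf M \<omega>" using M(2) by (simp add: A_def)
    also have "\<dots> \<le> real (card {js \<in> JM d M. good d q K \<omega> t (gp K js)})" by (rule Nf_le)
    also have "\<dots> \<le> real (betti d q (Xt d \<omega> t \<inter> Lambda d ((2 * K + 1) * M))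
      + 2 * d * (2 * (2 * ((2 * K + 1) * M) + 1)) ^ (d - 1))"
      by (simp only: of_nat_le_iff det_bound)
    finally show ?thesis using M(1) by (intro exI[of _ M]) simp
  qed
  have sm: "strict_mono (\<lambda>M. (2 * K + 1) * M)" by (rule strict_monoI, rule mult_strict_left_mono) simp_all
  have conv2: "(\<lambda>M. real (betti d q (Xt d \<omega> t \<inter> Lambda d ((2 * K + 1) * M))) / (2 * real ((2 * K + 1) * M)) ^ d)
      \<longlonglongrightarrow> beta_hat"
    using LIMSEQ_subseq_LIMSEQ[OF conv sm] unfolding comp_def .
  show ?thesis
    by (rule final_arith[OF conv2 freq p0]) (use assms(5) in simp)
qed

end
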